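(* Let $A\in\mathbb{R}^{n\times n}$ be symmetric with rank $r$. (1) Consider the linear program in the variables $H^+,H^-\in\mathbb{R}^{n\times n}$: minimize $\sum_{i,j}(H^+_{ij}+H^-_{ij})$ subject to $A(H^+-H^-)A=A$, $H^+\ge 0$, $H^-\ge 0$. For every extreme point $(H^+,H^-)$ of its feasible region, the matrix $H:=H^+-H^-$ has at most $r^2$ nonzero entries. Moreover this bound is sharp: for all $n\ge r\ge 1$ there is a symmetric $n\times n$ matrix $A$ of rank $r$ for which some extreme solution $H$ of this linear program has exactly $r^2$ nonzero entries. (2) Consider the linear program in the variables $H^+,H^-$ ranging over symmetric $n\times n$ matrices: minimize $\sum_{i,j}(H^+_{ij}+H^-_{ij})$ subject to $A(H^+-H^-)A=A$, $H^+\ge 0$, $H^-\ge 0$ (this is the linear program for $\min\{\|H\|_1: AHA=A,\ H^\top=H\}$). For every extreme point $(H^+,H^-)$ of its feasible region, the matrix $H:=H^+-H^-$ has at most $r^2+r$ nonzero entries. Moreover this bound is sharp for $n-2\ge r\ge 3$: for such $n,r$ there is a symmetric $n\times n$ matrix $A$ of rank $r$ for which some extreme solution $H$ of this linear program has exactly $r^2+r$ nonzero entries.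
   Context: For a matrix $H$, $\|H\|_1=\sum_{i,j}|H_{ij}|$ (the entrywise 1-norm). Inequalities $H\ge 0$ are entrywise. *)

theory Defs
  imports "Jordan_Normal_Form.DL_Rank"
begin

text \<open>Real n x n matrices are JNF matrices in carrier_mat n n; rank is vec_space.rank n.\<close>

definition mat_nonneg :: "real mat \<Rightarrow> bool" where
  "mat_nonneg H \<longleftrightarrow> (\<forall>i < dim_row H. \<forall>j < dim_col H. H $$ (i,j) \<ge> 0)"

definition mat_symmetric :: "real mat \<Rightarrow> bool" where
  "mat_symmetric H \<longleftrightarrow> H = transpose_mat H"

definition nnz :: "real mat \<Rightarrow> nat" where
  "nnz H = card {(i,j). i < dim_row H \<and> j < dim_col H \<and> H $$ (i,j) \<noteq> 0}"

definition feasible1 :: "nat \<Rightarrow> real mat \<Rightarrow> (real mat \<times> real mat) set" where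
  "feasible1 n A = {(P, M). P \<in> carrier_mat n n \<and> M \<in> carrier_mat n n \<and>
      A * (P - M) * A = A \<and> mat_nonneg P \<and> mat_nonneg M}"

definition feasible2 :: "nat \<Rightarrow> real mat \<Rightarrow> (real mat \<times> real mat) set" where
  "feasible2 n A = {(P, M). P \<in> carrier_mat n n \<and> M \<in> carrier_mat n n \<and>
      mat_symmetric P \<and> mat_symmetric M \<and>
      A * (P - M) * A = A \<and> mat_nonneg P \<and> mat_nonneg M}"

definition extreme_point_pair :: "(real mat \<times> real mat) set \<Rightarrow> real mat \<times> real mat \<Rightarrow> bool" where
  "extreme_point_pair S x \<longleftrightarrow> x \<in> S \<and>
     (\<forall>y\<in>S. \<forall>z\<in>S. \<forall>t::real. 0 < t \<and> t < 1 \<and>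
        x = (t \<cdot>\<^sub>m fst y + (1 - t) \<cdot>\<^sub>m fst z, t \<cdot>\<^sub>m snd y + (1 - t) \<cdot>\<^sub>m snd z) \<longrightarrow> y = z)"

end

theory Submission
  imports Defs "Jordan_Normal_Form.DL_Rank_Submatrix"
begin

lemma perturb_eps:
  fixes P DP :: "real mat"
  assumes P: "P \<in> carrier_mat n n" and DP: "DP \<in> carrier_mat n n"
    and nn: "mat_nonneg P"
    and supp: "\<forall>i<n. \<forall>j<n. P $$ (i,j) = 0 \<longrightarrow> DP $$ (i,j) = 0"
  shows "\<exists>e>0. \<forall>e'. \<bar>e'\<bar> \<le> e \<longrightarrow> mat_nonneg (P + e' \<cdot>\<^sub>m DP)"
proof -
  define E where "E = {P $$ (i,j) / \<bar>DP $$ (i,j)\<bar> | i j. i < n \<and> j < n \<and> DP $$ (i,j) \<noteq> 0}"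
  have fE: "finite E"
  proof -
    have "E \<subseteq> (\<lambda>(i,j). P $$ (i,j) / \<bar>DP $$ (i,j)\<bar>) ` ({..<n} \<times> {..<n})"
      unfolding E_def by auto
    then show ?thesis by (rule finite_subset) auto
  qed
  have pos: "x > 0" if "x \<in> E" for x
  proof -
    from that obtain i j where ij: "i < n" "j < n" "DP $$ (i,j) \<noteq> 0" and x: "x = P $$ (i,j) / \<bar>DP $$ (i,j)\<bar>"
      unfolding E_def by blast
    have "P $$ (i,j) \<ge> 0" using nn P ij unfolding mat_nonneg_def by auto
    moreover have "P $$ (i,j) \<noteq> 0" using supp ij by auto
    ultimately show ?thesis using x ij by auto
  qed
  define e where "e = (if E = {} then 1 else Min E)"
  have epos: "e > 0" using pos fE unfolding e_def by auto
  have "mat_nonneg (P + e' \<cdot>\<^sub>m DP)" if e': "\<bar>e'\<bar> \<le> e" for e'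
    unfolding mat_nonneg_def
  proof (intro allI impI)
    fix i j assume i: "i < dim_row (P + e' \<cdot>\<^sub>m DP)" and j: "j < dim_col (P + e' \<cdot>\<^sub>m DP)"
    then have i: "i < n" and j: "j < n" using P DP by auto
    have p0: "P $$ (i,j) \<ge> 0" using nn P i j unfolding mat_nonneg_def by auto
    show "(P + e' \<cdot>\<^sub>m DP) $$ (i,j) \<ge> 0"
    proof (cases "DP $$ (i,j) = 0")
      case True then show ?thesis using i j P DP p0 by simp
    next
      case False
      then have inE: "P $$ (i,j) / \<bar>DP $$ (i,j)\<bar> \<in> E" unfolding E_def using i j by blast
      then have "e \<le> P $$ (i,j) / \<bar>DP $$ (i,j)\<bar>" unfolding e_def using fE by auto
      then have "e * \<bar>DP $$ (i,j)\<bar> \<le> P $$ (i,j)"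
        using False by (simp add: le_divide_eq)
      moreover have "\<bar>e'\<bar> * \<bar>DP $$ (i,j)\<bar> \<le> e * \<bar>DP $$ (i,j)\<bar>"
        using e' by (intro mult_right_mono) auto
      ultimately have "\<bar>e'\<bar> * \<bar>DP $$ (i,j)\<bar> \<le> P $$ (i,j)" by linarith
      moreover have "- (\<bar>e'\<bar> * \<bar>DP $$ (i,j)\<bar>) \<le> e' * DP $$ (i,j)"
        by (metis abs_ge_minus_self abs_mult minus_le_iff)
      ultimately show ?thesis using i j P DP by simp
    qed
  qed
  then show ?thesis using epos by blast
qed

lemma sandwich_perturb:
  fixes A P M DP DM :: "real mat"
  assumes A: "A \<in> carrier_mat n n" and P: "P \<in> carrier_mat n n" and M: "M \<in> carrier_mat n n"
    and DP: "DP \<in> carrier_mat n n" and DM: "DM \<in> carrier_mat n n"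
    and z: "A * (DP - DM) * A = 0\<^sub>m n n"
  shows "A * ((P + e \<cdot>\<^sub>m DP) - (M + e \<cdot>\<^sub>m DM)) * A = A * (P - M) * A"
proof -
  have "(P + e \<cdot>\<^sub>m DP) - (M + e \<cdot>\<^sub>m DM) = (P - M) + e \<cdot>\<^sub>m (DP - DM)"
    by (rule eq_matI, insert P M DP DM, auto simp: algebra_simps)
  then have "A * ((P + e \<cdot>\<^sub>m DP) - (M + e \<cdot>\<^sub>m DM)) * A = A * ((P - M) + e \<cdot>\<^sub>m (DP - DM)) * A" by simp
  also have "\<dots> = A * (P - M) * A + A * (e \<cdot>\<^sub>m (DP - DM)) * A"
  proof -
    have X: "P - M \<in> carrier_mat n n" and Y: "e \<cdot>\<^sub>m (DP - DM) \<in> carrier_mat n n" using P M DP DM by auto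
    have "A * ((P - M) + e \<cdot>\<^sub>m (DP - DM)) = A * (P - M) + A * (e \<cdot>\<^sub>m (DP - DM))"
      using mult_add_distrib_mat[OF A X Y] .
    moreover have "(A * (P - M) + A * (e \<cdot>\<^sub>m (DP - DM))) * A = A * (P - M) * A + A * (e \<cdot>\<^sub>m (DP - DM)) * A"
      by (rule add_mult_distrib_mat[OF mult_carrier_mat[OF A X] mult_carrier_mat[OF A Y] A])
    ultimately show ?thesis by simp
  qed
  also have "A * (e \<cdot>\<^sub>m (DP - DM)) * A = e \<cdot>\<^sub>m (A * (DP - DM) * A)"
  proof -
    have X: "DP - DM \<in> carrier_mat n n" using DP DM by auto
    show ?thesis using mult_smult_distrib[OF A X, of e] mult_smult_assoc_mat[OF mult_carrier_mat[OF A X] A, of e]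
      by simp
  qed
  also have "\<dots> = 0\<^sub>m n n" using z by simp
  finally show ?thesis using A P M
    by (metis right_add_zero_mat mult_carrier_mat minus_carrier_mat)
qed


lemma extreme_core:
  fixes P M DP DM :: "real mat"
  assumes ext: "extreme_point_pair S (P, M)"
    and P: "P \<in> carrier_mat n n" and M: "M \<in> carrier_mat n n"
    and DP: "DP \<in> carrier_mat n n" and DM: "DM \<in> carrier_mat n n"
    and e: "e > 0"
    and y: "(P + e \<cdot>\<^sub>m DP, M + e \<cdot>\<^sub>m DM) \<in> S"
    and z: "(P + (-e) \<cdot>\<^sub>m DP, M + (-e) \<cdot>\<^sub>m DM) \<in> S"
  shows "DP = 0\<^sub>m n n \<and> DM = 0\<^sub>m n n"
proof -
  let ?y = "(P + e \<cdot>\<^sub>m DP, M + e \<cdot>\<^sub>m DM)" and ?z = "(P + (-e) \<cdot>\<^sub>m DP, M + (-e) \<cdot>\<^sub>m DM)"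
  have "P = (1/2::real) \<cdot>\<^sub>m fst ?y + (1 - 1/2) \<cdot>\<^sub>m fst ?z"
    by (rule eq_matI, insert P DP, auto simp: algebra_simps)
  moreover have "M = (1/2::real) \<cdot>\<^sub>m snd ?y + (1 - 1/2) \<cdot>\<^sub>m snd ?z"
    by (rule eq_matI, insert M DM, auto simp: algebra_simps)
  moreover have H: "\<forall>y\<in>S. \<forall>z\<in>S. \<forall>t::real. 0 < t \<and> t < 1 \<and>
        (P, M) = (t \<cdot>\<^sub>m fst y + (1 - t) \<cdot>\<^sub>m fst z, t \<cdot>\<^sub>m snd y + (1 - t) \<cdot>\<^sub>m snd z) \<longrightarrow> y = z"
    using ext unfolding extreme_point_pair_def by blast
  ultimately have "?y = ?z" using H[rule_format, OF y z, of "1/2"] by simp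
  then have e1: "P + e \<cdot>\<^sub>m DP = P + (-e) \<cdot>\<^sub>m DP" and e2: "M + e \<cdot>\<^sub>m DM = M + (-e) \<cdot>\<^sub>m DM" by auto
  have "DP = 0\<^sub>m n n"
  proof (rule eq_matI)
    fix i j assume "i < dim_row (0\<^sub>m n n)" "j < dim_col (0\<^sub>m n n)"
    then have i: "i < n" and j: "j < n" by auto
    have "(P + e \<cdot>\<^sub>m DP) $$ (i,j) = (P + (-e) \<cdot>\<^sub>m DP) $$ (i,j)" using e1 by simp
    then have "e * DP $$ (i,j) = - e * DP $$ (i,j)" using i j P DP by simp
    then show "DP $$ (i,j) = 0\<^sub>m n n $$ (i,j)" using e i j by simp
  qed (use DP in auto)
  moreover have "DM = 0\<^sub>m n n"
  proof (rule eq_matI)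
    fix i j assume "i < dim_row (0\<^sub>m n n)" "j < dim_col (0\<^sub>m n n)"
    then have i: "i < n" and j: "j < n" by auto
    have "(M + e \<cdot>\<^sub>m DM) $$ (i,j) = (M + (-e) \<cdot>\<^sub>m DM) $$ (i,j)" using e2 by simp
    then have "e * DM $$ (i,j) = - e * DM $$ (i,j)" using i j M DM by simp
    then show "DM $$ (i,j) = 0\<^sub>m n n $$ (i,j)" using e i j by simp
  qed (use DM in auto)
  ultimately show ?thesis ..
qed

lemma common_eps:
  fixes P M DP DM :: "real mat"
  assumes P: "P \<in> carrier_mat n n" and M: "M \<in> carrier_mat n n"
    and DP: "DP \<in> carrier_mat n n" and DM: "DM \<in> carrier_mat n n"
    and nP: "mat_nonneg P" and nM: "mat_nonneg M"
    and sP: "\<forall>i<n. \<forall>j<n. P $$ (i,j) = 0 \<longrightarrow> DP $$ (i,j) = 0"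
    and sM: "\<forall>i<n. \<forall>j<n. M $$ (i,j) = 0 \<longrightarrow> DM $$ (i,j) = 0"
  shows "\<exists>e>0. mat_nonneg (P + e \<cdot>\<^sub>m DP) \<and> mat_nonneg (P + (-e) \<cdot>\<^sub>m DP)
              \<and> mat_nonneg (M + e \<cdot>\<^sub>m DM) \<and> mat_nonneg (M + (-e) \<cdot>\<^sub>m DM)"
proof -
  obtain e1 where e1: "e1 > 0" "\<forall>e'. \<bar>e'\<bar> \<le> e1 \<longrightarrow> mat_nonneg (P + e' \<cdot>\<^sub>m DP)"
    using perturb_eps[OF P DP nP sP] by blast
  obtain e2 where e2: "e2 > 0" "\<forall>e'. \<bar>e'\<bar> \<le> e2 \<longrightarrow> mat_nonneg (M + e' \<cdot>\<^sub>m DM)"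
    using perturb_eps[OF M DM nM sM] by blast
  show ?thesis
    by (rule exI[of _ "min e1 e2"], insert e1 e2, auto)
qed

lemma no_dir1:
  fixes A P M DP DM :: "real mat"
  assumes A: "A \<in> carrier_mat n n" and ext: "extreme_point_pair (feasible1 n A) (P, M)"
    and DP: "DP \<in> carrier_mat n n" and DM: "DM \<in> carrier_mat n n"
    and sP: "\<forall>i<n. \<forall>j<n. P $$ (i,j) = 0 \<longrightarrow> DP $$ (i,j) = 0"
    and sM: "\<forall>i<n. \<forall>j<n. M $$ (i,j) = 0 \<longrightarrow> DM $$ (i,j) = 0"
    and z: "A * (DP - DM) * A = 0\<^sub>m n n"
  shows "DP = 0\<^sub>m n n \<and> DM = 0\<^sub>m n n"
proof -
  have f: "(P, M) \<in> feasible1 n A" using ext unfolding extreme_point_pair_def by blast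
  then have P: "P \<in> carrier_mat n n" and M: "M \<in> carrier_mat n n" and eq: "A * (P - M) * A = A"
    and nP: "mat_nonneg P" and nM: "mat_nonneg M" unfolding feasible1_def by auto
  obtain e where e: "e > 0" "mat_nonneg (P + e \<cdot>\<^sub>m DP)" "mat_nonneg (P + (-e) \<cdot>\<^sub>m DP)"
      "mat_nonneg (M + e \<cdot>\<^sub>m DM)" "mat_nonneg (M + (-e) \<cdot>\<^sub>m DM)"
    using common_eps[OF P M DP DM nP nM sP sM] by blast
  have y: "(P + e \<cdot>\<^sub>m DP, M + e \<cdot>\<^sub>m DM) \<in> feasible1 n A"
    unfolding feasible1_def using e P M DP DM sandwich_perturb[OF A P M DP DM z, of e] eq by auto
  have z': "(P + (-e) \<cdot>\<^sub>m DP, M + (-e) \<cdot>\<^sub>m DM) \<in> feasible1 n A"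
    unfolding feasible1_def using e P M DP DM sandwich_perturb[OF A P M DP DM z, of "-e"] eq by auto
  show ?thesis using extreme_core[OF ext P M DP DM e(1) y z'] .
qed

lemma sym_iff:
  fixes H :: "real mat"
  assumes "H \<in> carrier_mat n n"
  shows "mat_symmetric H \<longleftrightarrow> (\<forall>i<n. \<forall>j<n. H $$ (i,j) = H $$ (j,i))"
  unfolding mat_symmetric_def
proof
  assume "H = transpose_mat H"
  then show "\<forall>i<n. \<forall>j<n. H $$ (i,j) = H $$ (j,i)" using assms
    by (metis carrier_matD index_transpose_mat(1))
next
  assume "\<forall>i<n. \<forall>j<n. H $$ (i,j) = H $$ (j,i)"
  then show "H = transpose_mat H" using assms by (intro eq_matI) auto
qed

lemma sym_add_smult:
  fixes P D :: "real mat"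
  assumes "P \<in> carrier_mat n n" "D \<in> carrier_mat n n" "mat_symmetric P" "mat_symmetric D"
  shows "mat_symmetric (P + e \<cdot>\<^sub>m D)"
  using assms by (simp add: sym_iff[of _ n])

lemma no_dir2:
  fixes A P M DP DM :: "real mat"
  assumes A: "A \<in> carrier_mat n n" and ext: "extreme_point_pair (feasible2 n A) (P, M)"
    and DP: "DP \<in> carrier_mat n n" and DM: "DM \<in> carrier_mat n n"
    and syP: "mat_symmetric DP" and syM: "mat_symmetric DM"
    and sP: "\<forall>i<n. \<forall>j<n. P $$ (i,j) = 0 \<longrightarrow> DP $$ (i,j) = 0"
    and sM: "\<forall>i<n. \<forall>j<n. M $$ (i,j) = 0 \<longrightarrow> DM $$ (i,j) = 0"
    and z: "A * (DP - DM) * A = 0\<^sub>m n n"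
  shows "DP = 0\<^sub>m n n \<and> DM = 0\<^sub>m n n"
proof -
  have f: "(P, M) \<in> feasible2 n A" using ext unfolding extreme_point_pair_def by blast
  then have P: "P \<in> carrier_mat n n" and M: "M \<in> carrier_mat n n" and eq: "A * (P - M) * A = A"
    and nP: "mat_nonneg P" and nM: "mat_nonneg M" and sy: "mat_symmetric P" "mat_symmetric M"
    unfolding feasible2_def by auto
  obtain e where e: "e > 0" "mat_nonneg (P + e \<cdot>\<^sub>m DP)" "mat_nonneg (P + (-e) \<cdot>\<^sub>m DP)"
      "mat_nonneg (M + e \<cdot>\<^sub>m DM)" "mat_nonneg (M + (-e) \<cdot>\<^sub>m DM)"
    using common_eps[OF P M DP DM nP nM sP sM] by blast
  have y: "(P + e \<cdot>\<^sub>m DP, M + e \<cdot>\<^sub>m DM) \<in> feasible2 n A"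
    unfolding feasible2_def using e P M DP DM sandwich_perturb[OF A P M DP DM z, of e] eq
      sym_add_smult[OF P DP sy(1) syP] sym_add_smult[OF M DM sy(2) syM] by auto
  have z': "(P + (-e) \<cdot>\<^sub>m DP, M + (-e) \<cdot>\<^sub>m DM) \<in> feasible2 n A"
    unfolding feasible2_def using e P M DP DM sandwich_perturb[OF A P M DP DM z, of "-e"] eq
      sym_add_smult[OF P DP sy(1) syP] sym_add_smult[OF M DM sy(2) syM] by auto
  show ?thesis using extreme_core[OF ext P M DP DM e(1) y z'] .
qed


lemma many_vectors_dep:
  fixes w :: "'i \<Rightarrow> nat \<Rightarrow> real"
  assumes fin: "finite I" and card: "card I > K"
  shows "\<exists>c. (\<exists>s\<in>I. c s \<noteq> 0) \<and> (\<forall>m<K. (\<Sum>s\<in>I. c s * w s m) = 0)"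
proof -
  interpret V: vec_space "TYPE(real)" K .
  define v where "v s = vec K (w s)" for s
  show ?thesis
  proof (cases "inj_on v I")
    case False
    then obtain s t where st: "s \<in> I" "t \<in> I" "s \<noteq> t" "v s = v t"
      unfolding inj_on_def by blast
    define c where "c x = (if x = s then 1 else if x = t then -1 else (0::real))" for x
    have "\<forall>m<K. (\<Sum>x\<in>I. c x * w x m) = 0"
    proof (intro allI impI)
      fix m assume m: "m < K"
      have e: "w s m = w t m" using arg_cong[OF st(4), of "\<lambda>x. x $ m"] m by (simp add: v_def)
      have "(\<Sum>x\<in>I. c x * w x m) = (\<Sum>x\<in>{s,t}. c x * w x m)"
        by (rule sum.mono_neutral_right, insert fin st, auto simp: c_def)
      also have "\<dots> = 0" using st e by (simp add: c_def)
      finally show "(\<Sum>x\<in>I. c x * w x m) = 0" .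
    qed
    moreover have "c s \<noteq> 0" by (simp add: c_def)
    ultimately show ?thesis using st by blast
  next
    case True
    let ?S = "v ` I"
    have Sc: "?S \<subseteq> carrier_vec K" by (auto simp: v_def)
    have cS: "card ?S = card I" using card_image[OF True] .
    have fS: "finite ?S" using fin by simp
    have "V.lin_dep ?S"
    proof (rule ccontr)
      assume "\<not> V.lin_dep ?S"
      from V.li_le_dim(2)[OF V.fin_dim _ this] Sc have "card ?S \<le> V.dim" by simp
      then show False using cS card V.dim_is_n by simp
    qed
    from V.finite_lin_dep[OF fS this] Sc obtain a u where
      a: "V.lincomb a ?S = 0\<^sub>v K" "u \<in> ?S" "a u \<noteq> 0" by auto
    define c where "c s = a (v s)" for s
    have "\<forall>m<K. (\<Sum>s\<in>I. c s * w s m) = 0"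
    proof (intro allI impI)
      fix m assume m: "m < K"
      have "(\<Sum>s\<in>I. c s * w s m) = (\<Sum>x\<in>?S. a x * x $ m)"
        by (subst sum.reindex[OF True], simp add: c_def v_def m)
      also have "\<dots> = V.lincomb a ?S $ m" using V.lincomb_index[OF m Sc] by simp
      also have "\<dots> = 0" using a m by simp
      finally show "(\<Sum>s\<in>I. c s * w s m) = 0" .
    qed
    moreover from a obtain s where "s \<in> I" "c s \<noteq> 0" by (auto simp: c_def)
    ultimately show ?thesis by blast
  qed
qed

lemma many_vectors_dep_set:
  fixes w :: "'i \<Rightarrow> 'q \<Rightarrow> real"
  assumes fin: "finite I" and fQ: "finite Q" and card: "card I > card Q"
  shows "\<exists>c. (\<exists>s\<in>I. c s \<noteq> 0) \<and> (\<forall>q\<in>Q. (\<Sum>s\<in>I. c s * w s q) = 0)"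
proof -
  obtain g where g: "bij_betw g {..<card Q} Q"
    using ex_bij_betw_nat_finite[OF fQ] unfolding atLeast0LessThan by blast
  obtain c where c: "\<exists>s\<in>I. c s \<noteq> 0" "\<forall>m<card Q. (\<Sum>s\<in>I. c s * w s (g m)) = 0"
    using many_vectors_dep[OF fin card, of "\<lambda>s m. w s (g m)"] by blast
  have "\<forall>q\<in>Q. (\<Sum>s\<in>I. c s * w s q) = 0"
  proof
    fix q assume "q \<in> Q"
    then obtain m where "m < card Q" "q = g m" using g unfolding bij_betw_def by auto
    then show "(\<Sum>s\<in>I. c s * w s q) = 0" using c(2) by simp
  qed
  then show ?thesis using c(1) by blast
qed

lemma rank_basis:
  fixes A :: "real mat"
  assumes A: "A \<in> carrier_mat n n"
  shows "\<exists>b X. \<forall>i<n. \<forall>j<n. A $$ (i,j) = (\<Sum>k<vec_space.rank n A. X k j * b k i)"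
proof -
  interpret V: vec_space "TYPE(real)" n .
  have colsC: "set (cols A) \<subseteq> carrier_vec n" using A cols_dim by blast
  obtain S where "maximal S (\<lambda>T. T \<subseteq> set (cols A) \<and> V.lin_indpt T)"
    using maximal_exists[of "(\<lambda>T. T \<subseteq> set (cols A) \<and> V.lin_indpt T)" "card (set (cols A))" "{}"]
    by (meson List.finite_set card_mono empty_iff empty_subsetI V.finite_lin_indpt2 rev_finite_subset)
  note S = this
  have rk: "V.rank A = card S" using V.rank_card_indpt[OF A S] .
  have SA: "S \<subseteq> set (cols A)" and li: "V.lin_indpt S" using S unfolding maximal_def by auto
  have SC: "S \<subseteq> carrier_vec n" using SA colsC by auto
  have fS: "finite S" using SA finite_subset by blast
  have span: "col A j \<in> V.span S" if j: "j < n" for j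
  proof (cases "col A j \<in> S")
    case True then show ?thesis using V.in_own_span[OF SC] by blast
  next
    case False
    have cj: "col A j \<in> set (cols A)" using j A by (simp add: cols_def)
    have "V.lin_dep (S \<union> {col A j})"
    proof (rule ccontr)
      assume "V.lin_indpt (S \<union> {col A j})"
      moreover have "S \<union> {col A j} \<subseteq> set (cols A)" using cj SA by auto
      moreover have "S \<subseteq> S \<union> {col A j}" by auto
      moreover have "\<forall>B. B \<supseteq> S \<and> (B \<subseteq> set (cols A) \<and> V.lin_indpt B) \<longrightarrow> B = S"
        using S unfolding maximal_def by blast
      ultimately have "S \<union> {col A j} = S" by blast
      then show False using False by auto
    qed
    moreover have "col A j \<in> carrier_vec n" using cj colsC by blast
    ultimately show ?thesis using V.lin_dep_iff_in_span[OF SC li _ False] by simp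
  qed
  have "\<forall>j. \<exists>a. j < n \<longrightarrow> V.lincomb a S = col A j"
    using V.finite_in_span[OF fS SC span] by blast
  then obtain a where a: "\<And>j. j < n \<Longrightarrow> V.lincomb (a j) S = col A j" by metis
  obtain f where f: "bij_betw f {..<card S} S" using ex_bij_betw_nat_finite[OF fS]
    using ex_bij_betw_nat_finite[OF fS] unfolding atLeast0LessThan by blast
  have "\<forall>i<n. \<forall>j<n. A $$ (i,j) = (\<Sum>k<card S. a j (f k) * f k $ i)"
  proof (intro allI impI)
    fix i j assume i: "i < n" and j: "j < n"
    have "A $$ (i,j) = col A j $ i" using i j A by simp
    also have "\<dots> = V.lincomb (a j) S $ i" using a[OF j] by simp
    also have "\<dots> = (\<Sum>x\<in>S. a j x * x $ i)" using V.lincomb_index[OF i SC] .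
    also have "\<dots> = (\<Sum>k<card S. a j (f k) * f k $ i)"
      using sum.reindex_bij_betw[OF f, of "\<lambda>x. a j x * x $ i"] by simp
    finally show "A $$ (i,j) = (\<Sum>k<card S. a j (f k) * f k $ i)" .
  qed
  then show ?thesis unfolding rk
    by (intro exI[where x="\<lambda>k i. f k $ i"] exI[where x="\<lambda>k j. a j (f k)"])
qed

lemma ADA_zero:
  fixes A D :: "real mat"
  assumes A: "A \<in> carrier_mat n n" and D: "D \<in> carrier_mat n n"
    and sym: "\<forall>i<n. \<forall>j<n. A $$ (i,j) = A $$ (j,i)"
    and rep: "\<forall>i<n. \<forall>j<n. A $$ (i,j) = (\<Sum>k<r. X k j * b k i)"
    and q: "\<forall>k<r. \<forall>l<r. (\<Sum>i<n. \<Sum>j<n. b k i * D $$ (i,j) * b l j) = 0"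
  shows "A * D * A = 0\<^sub>m n n"
proof (rule eq_matI)
  fix a c assume a: "a < dim_row (0\<^sub>m n n)" and c: "c < dim_col (0\<^sub>m n n)"
  then have a: "a < n" and c: "c < n" by auto
  have "(A * D * A) $$ (a,c) = (\<Sum>i<n. \<Sum>j<n. A $$ (a,i) * D $$ (i,j) * A $$ (j,c))"
    using A D a c by (simp add: scalar_prod_def atLeast0LessThan sum_distrib_left mult.assoc)
  also have "\<dots> = (\<Sum>i<n. \<Sum>j<n. (\<Sum>k<r. X k a * b k i) * D $$ (i,j) * (\<Sum>l<r. X l c * b l j))"
    using sym rep a c by (intro sum.cong refl, auto)
  also have "\<dots> = (\<Sum>i<n. \<Sum>j<n. \<Sum>k<r. \<Sum>l<r. (X k a * X l c) * (b k i * D $$ (i,j) * b l j))"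
    by (simp add: sum_distrib_left sum_distrib_right mult_ac)
  also have "\<dots> = (\<Sum>i<n. \<Sum>k<r. \<Sum>j<n. \<Sum>l<r. (X k a * X l c) * (b k i * D $$ (i,j) * b l j))"
    by (rule sum.cong[OF refl], rule sum.swap)
  also have "\<dots> = (\<Sum>k<r. \<Sum>i<n. \<Sum>j<n. \<Sum>l<r. (X k a * X l c) * (b k i * D $$ (i,j) * b l j))"
    by (rule sum.swap)
  also have "\<dots> = (\<Sum>k<r. \<Sum>i<n. \<Sum>l<r. \<Sum>j<n. (X k a * X l c) * (b k i * D $$ (i,j) * b l j))"
    by (intro sum.cong refl, rule sum.swap)
  also have "\<dots> = (\<Sum>k<r. \<Sum>l<r. \<Sum>i<n. \<Sum>j<n. (X k a * X l c) * (b k i * D $$ (i,j) * b l j))"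
    by (intro sum.cong refl, rule sum.swap)
  also have "\<dots> = (\<Sum>k<r. \<Sum>l<r. (X k a * X l c) * (\<Sum>i<n. \<Sum>j<n. b k i * D $$ (i,j) * b l j))"
    by (simp add: sum_distrib_left)
  also have "\<dots> = 0" using q by simp
  finally show "(A * D * A) $$ (a,c) = 0\<^sub>m n n $$ (a,c)" using a c by simp
qed (use A D in auto)

lemma sum_square_support:
  fixes g :: "nat \<Rightarrow> nat \<Rightarrow> real"
  assumes T: "T \<subseteq> {..<n} \<times> {..<n}"
  shows "(\<Sum>i<n. \<Sum>j<n. (if (i,j) \<in> T then g i j else 0)) = (\<Sum>p\<in>T. g (fst p) (snd p))"
proof -
  have "(\<Sum>i<n. \<Sum>j<n. (if (i,j) \<in> T then g i j else 0))
      = (\<Sum>p\<in>{..<n} \<times> {..<n}. (if p \<in> T then g (fst p) (snd p) else 0))"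
    by (subst sum.cartesian_product) (simp add: case_prod_beta)
  also have "\<dots> = (\<Sum>p\<in>({..<n} \<times> {..<n}) \<inter> T. g (fst p) (snd p))"
    by (rule sum.inter_restrict[symmetric]) simp
  also have "({..<n} \<times> {..<n}) \<inter> T = T" using T by blast
  finally show ?thesis .
qed


lemma nnz_le_support:
  fixes P M :: "real mat"
  assumes P: "P \<in> carrier_mat n n" and M: "M \<in> carrier_mat n n"
  shows "nnz (P - M) \<le> card {(i,j). i < n \<and> j < n \<and> P $$ (i,j) \<noteq> 0} + card {(i,j). i < n \<and> j < n \<and> M $$ (i,j) \<noteq> 0}"
proof -
  let ?T1 = "{(i,j). i < n \<and> j < n \<and> P $$ (i,j) \<noteq> 0}" and ?T2 = "{(i,j). i < n \<and> j < n \<and> M $$ (i,j) \<noteq> 0}"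
  have f1: "finite ?T1" by (rule finite_subset[of _ "{..<n} \<times> {..<n}"]) auto
  have f2: "finite ?T2" by (rule finite_subset[of _ "{..<n} \<times> {..<n}"]) auto
  have "{(i,j). i < dim_row (P - M) \<and> j < dim_col (P - M) \<and> (P - M) $$ (i,j) \<noteq> 0} \<subseteq> ?T1 \<union> ?T2"
    using P M by auto
  then have "nnz (P - M) \<le> card (?T1 \<union> ?T2)" unfolding nnz_def
    by (intro card_mono) (use f1 f2 in auto)
  also have "\<dots> \<le> card ?T1 + card ?T2" by (rule card_Un_le)
  finally show ?thesis .
qed

lemma bound1:
  fixes A P M :: "real mat"
  assumes A: "A \<in> carrier_mat n n" and sA: "mat_symmetric A"
    and ext: "extreme_point_pair (feasible1 n A) (P, M)"
  shows "nnz (P - M) \<le> (vec_space.rank n A)\<^sup>2"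
proof -
  define r where "r = vec_space.rank n A"
  obtain b X where rep: "\<forall>i<n. \<forall>j<n. A $$ (i,j) = (\<Sum>k<r. X k j * b k i)"
    using rank_basis[OF A] unfolding r_def by blast
  have sym: "\<forall>i<n. \<forall>j<n. A $$ (i,j) = A $$ (j,i)" using sA sym_iff[OF A] by blast
  have f: "(P, M) \<in> feasible1 n A" using ext unfolding extreme_point_pair_def by blast
  then have P: "P \<in> carrier_mat n n" and M: "M \<in> carrier_mat n n" unfolding feasible1_def by auto
  define T1 where "T1 = {(i,j). i < n \<and> j < n \<and> P $$ (i,j) \<noteq> 0}"
  define T2 where "T2 = {(i,j). i < n \<and> j < n \<and> M $$ (i,j) \<noteq> 0}"
  have T1s: "T1 \<subseteq> {..<n} \<times> {..<n}" and T2s: "T2 \<subseteq> {..<n} \<times> {..<n}" unfolding T1_def T2_def by auto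
  have f1: "finite T1" by (rule finite_subset[OF T1s]) auto
  have f2: "finite T2" by (rule finite_subset[OF T2s]) auto
  have main: "card T1 + card T2 \<le> r * r"
  proof (rule ccontr)
    assume "\<not> card T1 + card T2 \<le> r * r"
    then have cI: "card (T1 <+> T2) > card ({..<r} \<times> {..<r})"
      using card_Plus[OF f1 f2] by (simp add: card_cartesian_product)
    define w where "w s q = (case s of Inl p \<Rightarrow> b (fst q) (fst p) * b (snd q) (snd p)
                                | Inr p \<Rightarrow> - (b (fst q) (fst p) * b (snd q) (snd p)))" for s q
    obtain c where c: "\<exists>s\<in>T1 <+> T2. c s \<noteq> 0"
        "\<forall>q\<in>{..<r} \<times> {..<r}. (\<Sum>s\<in>T1 <+> T2. c s * w s q) = 0"
      using many_vectors_dep_set[of "T1 <+> T2" "{..<r} \<times> {..<r}" w] cI f1 f2 by auto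
    define DP where "DP = mat n n (\<lambda>(i,j). if (i,j) \<in> T1 then c (Inl (i,j)) else 0)"
    define DM where "DM = mat n n (\<lambda>(i,j). if (i,j) \<in> T2 then c (Inr (i,j)) else 0)"
    have DP: "DP \<in> carrier_mat n n" and DM: "DM \<in> carrier_mat n n" unfolding DP_def DM_def by auto
    have D: "DP - DM \<in> carrier_mat n n" using DP DM by auto
    have q: "\<forall>k<r. \<forall>l<r. (\<Sum>i<n. \<Sum>j<n. b k i * (DP - DM) $$ (i,j) * b l j) = 0"
    proof (intro allI impI)
      fix k l assume k: "k < r" and l: "l < r"
      have "(\<Sum>i<n. \<Sum>j<n. b k i * (DP - DM) $$ (i,j) * b l j)
          = (\<Sum>i<n. \<Sum>j<n. (if (i,j) \<in> T1 then c (Inl (i,j)) * (b k i * b l j) else 0))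
            - (\<Sum>i<n. \<Sum>j<n. (if (i,j) \<in> T2 then c (Inr (i,j)) * (b k i * b l j) else 0))"
        unfolding sum_subtractf[symmetric]
        by (intro sum.cong refl) (auto simp: DP_def DM_def algebra_simps)
      also have "\<dots> = (\<Sum>p\<in>T1. c (Inl p) * (b k (fst p) * b l (snd p)))
                     - (\<Sum>p\<in>T2. c (Inr p) * (b k (fst p) * b l (snd p)))"
        using sum_square_support[OF T1s, of "\<lambda>i j. c (Inl (i,j)) * (b k i * b l j)"]
              sum_square_support[OF T2s, of "\<lambda>i j. c (Inr (i,j)) * (b k i * b l j)"] by simp
      also have "\<dots> = (\<Sum>s\<in>T1 <+> T2. c s * w s (k,l))"
        by (subst sum.Plus[OF f1 f2]) (simp add: w_def sum_negf)
      also have "\<dots> = 0" using c(2) k l by simp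
      finally show "(\<Sum>i<n. \<Sum>j<n. b k i * (DP - DM) $$ (i,j) * b l j) = 0" .
    qed
    have z: "A * (DP - DM) * A = 0\<^sub>m n n" using ADA_zero[OF A D sym rep q] .
    have sP: "\<forall>i<n. \<forall>j<n. P $$ (i,j) = 0 \<longrightarrow> DP $$ (i,j) = 0" unfolding DP_def T1_def by auto
    have sM: "\<forall>i<n. \<forall>j<n. M $$ (i,j) = 0 \<longrightarrow> DM $$ (i,j) = 0" unfolding DM_def T2_def by auto
    have "DP = 0\<^sub>m n n \<and> DM = 0\<^sub>m n n" using no_dir1[OF A ext DP DM sP sM z] .
    moreover from c(1) obtain s where s: "s \<in> T1 <+> T2" "c s \<noteq> 0" by blast
    ultimately show False
    proof (cases s)
      case (Inl p)
      then have "p \<in> T1" using s by auto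
      then have "DP $$ p \<noteq> 0" using s Inl T1s unfolding DP_def by (cases p) auto
      moreover have "DP $$ p = 0" using \<open>DP = 0\<^sub>m n n \<and> DM = 0\<^sub>m n n\<close> \<open>p \<in> T1\<close> T1s by (cases p) auto
      ultimately show False by simp
    next
      case (Inr p)
      then have "p \<in> T2" using s by auto
      then have "DM $$ p \<noteq> 0" using s Inr T2s unfolding DM_def by (cases p) auto
      moreover have "DM $$ p = 0" using \<open>DP = 0\<^sub>m n n \<and> DM = 0\<^sub>m n n\<close> \<open>p \<in> T2\<close> T2s by (cases p) auto
      ultimately show False by simp
    qed
  qed
  have "nnz (P - M) \<le> card T1 + card T2" using nnz_le_support[OF P M] unfolding T1_def T2_def .
  also have "\<dots> \<le> r\<^sup>2" using main by (simp add: power2_eq_square)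
  finally show ?thesis unfolding r_def .
qed


lemma card_upper:
  "2 * card {(k,l). k \<le> l \<and> l < (r::nat)} = r * (r + 1)"
proof (induction r)
  case 0 then show ?case by simp
next
  case (Suc r)
  have e: "{(k,l). k \<le> l \<and> l < Suc r} = {(k,l). k \<le> l \<and> l < r} \<union> ({..r} \<times> {r})" by auto
  have f: "finite {(k,l). k \<le> l \<and> l < r}"
    by (rule finite_subset[of _ "{..r} \<times> {..<r}"]) auto
  have "card {(k,l). k \<le> l \<and> l < Suc r} = card {(k,l). k \<le> l \<and> l < r} + card ({..r} \<times> {r})"
    unfolding e by (rule card_Un_disjoint) (use f in auto)
  then show ?case using Suc by (simp add: card_cartesian_product)
qed

lemma sum_square_sym:
  fixes h :: "nat \<times> nat \<Rightarrow> real"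
  shows "(\<Sum>p\<in>{..<n} \<times> {..<n}. h p) =
    (\<Sum>p\<in>{(i,j). i \<le> j \<and> j < n}. (if fst p = snd p then h p else h p + h (snd p, fst p)))"
proof -
  let ?U = "{(i,j). i \<le> j \<and> j < (n::nat)}" and ?L = "{(i,j). j < i \<and> i < (n::nat)}"
  let ?SU = "{(i,j). i < j \<and> j < (n::nat)}"
  have fU: "finite ?U" by (rule finite_subset[of _ "{..<n} \<times> {..<n}"]) auto
  have fL: "finite ?L" by (rule finite_subset[of _ "{..<n} \<times> {..<n}"]) auto
  have fSU: "finite ?SU" by (rule finite_subset[of _ "{..<n} \<times> {..<n}"]) auto
  have sq: "{..<n} \<times> {..<n} = ?U \<union> ?L" by auto
  have "(\<Sum>p\<in>{..<n} \<times> {..<n}. h p) = (\<Sum>p\<in>?U. h p) + (\<Sum>p\<in>?L. h p)"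
    unfolding sq by (rule sum.union_disjoint) (use fU fL in auto)
  also have "(\<Sum>p\<in>?L. h p) = (\<Sum>p\<in>?SU. h (snd p, fst p))"
  proof -
    have "?L = (\<lambda>p. (snd p, fst p)) ` ?SU"
    proof
      show "?L \<subseteq> (\<lambda>p. (snd p, fst p)) ` ?SU"
      proof
        fix p assume "p \<in> ?L"
        then show "p \<in> (\<lambda>p. (snd p, fst p)) ` ?SU" by (intro image_eqI[of _ _ "(snd p, fst p)"]) auto
      qed
    qed auto
    moreover have "inj_on (\<lambda>p. (snd p, fst p)) ?SU" by (auto simp: inj_on_def)
    ultimately show ?thesis by (simp add: sum.reindex)
  qed
  also have "(\<Sum>p\<in>?SU. h (snd p, fst p)) = (\<Sum>p\<in>?U. if fst p = snd p then 0 else h (snd p, fst p))"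
    by (rule sum.mono_neutral_cong_left) (use fU in auto)
  also have "(\<Sum>p\<in>?U. h p) + \<dots> = (\<Sum>p\<in>?U. (if fst p = snd p then h p else h p + h (snd p, fst p)))"
    by (simp add: sum.distrib[symmetric] if_distrib cong: if_cong)
  finally show ?thesis .
qed


lemma q_sym:
  fixes D :: "real mat"
  assumes sD: "\<forall>i<n. \<forall>j<n. D $$ (i,j) = D $$ (j,i)"
  shows "(\<Sum>i<n. \<Sum>j<n. b k i * D $$ (i,j) * b l j) = (\<Sum>i<n. \<Sum>j<n. b l i * D $$ (i,j) * b k j)"
proof -
  have "(\<Sum>i<n. \<Sum>j<n. b k i * D $$ (i,j) * b l j) = (\<Sum>j<n. \<Sum>i<n. b k i * D $$ (i,j) * b l j)"
    by (rule sum.swap)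
  also have "\<dots> = (\<Sum>i<n. \<Sum>j<n. b l i * D $$ (i,j) * b k j)"
    using sD by (intro sum.cong refl) (auto simp: mult_ac)
  finally show ?thesis .
qed

lemma nnz_sym_bound:
  fixes H :: "real mat"
  assumes H: "H \<in> carrier_mat n n" and sH: "\<forall>i<n. \<forall>j<n. H $$ (i,j) = H $$ (j,i)"
  shows "nnz H \<le> 2 * card {(i,j). i \<le> j \<and> j < n \<and> H $$ (i,j) \<noteq> 0}"
proof -
  let ?S = "{(i,j). i < n \<and> j < n \<and> H $$ (i,j) \<noteq> 0}"
  let ?SU = "{(i,j). i \<le> j \<and> j < n \<and> H $$ (i,j) \<noteq> 0}"
  have fSU: "finite ?SU" by (rule finite_subset[of _ "{..<n} \<times> {..<n}"]) auto
  have "?S \<subseteq> ?SU \<union> (\<lambda>p. (snd p, fst p)) ` ?SU"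
  proof
    fix p assume p: "p \<in> ?S"
    obtain i j where pij: "p = (i,j)" by (cases p)
    show "p \<in> ?SU \<union> (\<lambda>p. (snd p, fst p)) ` ?SU"
    proof (cases "i \<le> j")
      case True then show ?thesis using p pij by auto
    next
      case False
      then have "(j,i) \<in> ?SU" using p pij sH by auto
      then show ?thesis using pij by (intro UnI2 image_eqI[of _ _ "(j,i)"]) auto
    qed
  qed
  then have "card ?S \<le> card (?SU \<union> (\<lambda>p. (snd p, fst p)) ` ?SU)"
    by (intro card_mono) (use fSU in auto)
  also have "\<dots> \<le> card ?SU + card ((\<lambda>p. (snd p, fst p)) ` ?SU)" by (rule card_Un_le)
  also have "\<dots> \<le> card ?SU + card ?SU" using card_image_le[OF fSU] by simp
  finally show ?thesis unfolding nnz_def using H by simp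
qed

lemma bound2:
  fixes A P M :: "real mat"
  assumes A: "A \<in> carrier_mat n n" and sA: "mat_symmetric A"
    and ext: "extreme_point_pair (feasible2 n A) (P, M)"
  shows "nnz (P - M) \<le> (vec_space.rank n A)\<^sup>2 + vec_space.rank n A"
proof -
  define r where "r = vec_space.rank n A"
  obtain b X where rep: "\<forall>i<n. \<forall>j<n. A $$ (i,j) = (\<Sum>k<r. X k j * b k i)"
    using rank_basis[OF A] unfolding r_def by blast
  have sym: "\<forall>i<n. \<forall>j<n. A $$ (i,j) = A $$ (j,i)" using sA sym_iff[OF A] by blast
  have f: "(P, M) \<in> feasible2 n A" using ext unfolding extreme_point_pair_def by blast
  then have P: "P \<in> carrier_mat n n" and M: "M \<in> carrier_mat n n"
    and syP: "mat_symmetric P" and syM: "mat_symmetric M" unfolding feasible2_def by auto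
  have sPe: "\<forall>i<n. \<forall>j<n. P $$ (i,j) = P $$ (j,i)" using syP sym_iff[OF P] by blast
  have sMe: "\<forall>i<n. \<forall>j<n. M $$ (i,j) = M $$ (j,i)" using syM sym_iff[OF M] by blast
  define U where "U = {(i,j). i \<le> j \<and> j < (n::nat)}"
  define Q where "Q = {(k,l). k \<le> l \<and> l < (r::nat)}"
  have fU: "finite U" unfolding U_def by (rule finite_subset[of _ "{..<n} \<times> {..<n}"]) auto
  have fQ: "finite Q" unfolding Q_def by (rule finite_subset[of _ "{..<r} \<times> {..<r}"]) auto
  define T1 where "T1 = {(i,j). i \<le> j \<and> j < n \<and> P $$ (i,j) \<noteq> 0}"
  define T2 where "T2 = {(i,j). i \<le> j \<and> j < n \<and> M $$ (i,j) \<noteq> 0}"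
  have T1s: "T1 \<subseteq> U" and T2s: "T2 \<subseteq> U" unfolding T1_def T2_def U_def by auto
  have f1: "finite T1" by (rule finite_subset[OF T1s fU])
  have f2: "finite T2" by (rule finite_subset[OF T2s fU])
  have main: "card T1 + card T2 \<le> card Q"
  proof (rule ccontr)
    assume "\<not> card T1 + card T2 \<le> card Q"
    then have cI: "card (T1 <+> T2) > card Q"
      using card_Plus[OF f1 f2] by simp
    define om where "om q p = (if fst p = snd p then b (fst q) (fst p) * b (snd q) (fst p)
        else b (fst q) (fst p) * b (snd q) (snd p) + b (fst q) (snd p) * b (snd q) (fst p))" for q p
    define w where "w s q = (case s of Inl p \<Rightarrow> om q p | Inr p \<Rightarrow> - om q p)" for s q
    obtain c where c: "\<exists>s\<in>T1 <+> T2. c s \<noteq> 0"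
        "\<forall>q\<in>Q. (\<Sum>s\<in>T1 <+> T2. c s * w s q) = 0"
      using many_vectors_dep_set[of "T1 <+> T2" Q w] cI f1 f2 fQ by auto
    define eP where "eP p = (if p \<in> T1 then c (Inl p) else 0)" for p
    define eM where "eM p = (if p \<in> T2 then c (Inr p) else 0)" for p
    define DP where "DP = mat n n (\<lambda>(i,j). if i \<le> j then eP (i,j) else eP (j,i))"
    define DM where "DM = mat n n (\<lambda>(i,j). if i \<le> j then eM (i,j) else eM (j,i))"
    have DP: "DP \<in> carrier_mat n n" and DM: "DM \<in> carrier_mat n n" unfolding DP_def DM_def by auto
    have D: "DP - DM \<in> carrier_mat n n" using DP DM by auto
    have sDe: "\<forall>i<n. \<forall>j<n. (DP - DM) $$ (i,j) = (DP - DM) $$ (j,i)"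
      unfolding DP_def DM_def by auto
    have sDP: "mat_symmetric DP" unfolding sym_iff[OF DP] unfolding DP_def by auto
    have sDM: "mat_symmetric DM" unfolding sym_iff[OF DM] unfolding DM_def by auto
    have qU: "(\<Sum>i<n. \<Sum>j<n. b k i * (DP - DM) $$ (i,j) * b l j) = 0" if kl: "k \<le> l" "l < r" for k l
    proof -
      let ?h = "\<lambda>p. b k (fst p) * (DP - DM) $$ p * b l (snd p)"
      have "(\<Sum>i<n. \<Sum>j<n. b k i * (DP - DM) $$ (i,j) * b l j) = (\<Sum>p\<in>{..<n} \<times> {..<n}. ?h p)"
        by (subst sum.cartesian_product) (simp add: case_prod_beta)
      also have "\<dots> = (\<Sum>p\<in>U. (if fst p = snd p then ?h p else ?h p + ?h (snd p, fst p)))"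
        unfolding sum_square_sym U_def ..
      also have "\<dots> = (\<Sum>p\<in>U. (eP p - eM p) * om (k,l) p)"
      proof (intro sum.cong refl)
        fix p assume "p \<in> U"
        then obtain i j where pij: "p = (i,j)" "i \<le> j" "j < n" unfolding U_def by auto
        then have i: "i < n" by simp
        show "(if fst p = snd p then ?h p else ?h p + ?h (snd p, fst p)) = (eP p - eM p) * om (k,l) p"
        proof (cases "i = j")
          case True then show ?thesis using pij DP DM unfolding DP_def DM_def om_def
            by (simp add: algebra_simps)
        next
          case False
          then have "\<not> j \<le> i" using pij by simp
          then show ?thesis using pij i False DP DM unfolding DP_def DM_def om_def
            by (simp add: algebra_simps)
        qed
      qed
      also have "\<dots> = (\<Sum>p\<in>U. (if p \<in> T1 then c (Inl p) * om (k,l) p else 0))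
                     - (\<Sum>p\<in>U. (if p \<in> T2 then c (Inr p) * om (k,l) p else 0))"
        unfolding sum_subtractf[symmetric] by (intro sum.cong refl) (auto simp: eP_def eM_def algebra_simps)
      also have "\<dots> = (\<Sum>p\<in>T1. c (Inl p) * om (k,l) p) - (\<Sum>p\<in>T2. c (Inr p) * om (k,l) p)"
        using sum.inter_restrict[OF fU, of "\<lambda>p. c (Inl p) * om (k,l) p" T1]
              sum.inter_restrict[OF fU, of "\<lambda>p. c (Inr p) * om (k,l) p" T2]
              Int_absorb1[OF T1s] Int_absorb1[OF T2s] by (simp add: Int_commute)
      also have "\<dots> = (\<Sum>s\<in>T1 <+> T2. c s * w s (k,l))"
        by (subst sum.Plus[OF f1 f2]) (simp add: w_def sum_negf)
      also have "\<dots> = 0" using c(2) kl unfolding Q_def by simp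
      finally show ?thesis .
    qed
    have q: "\<forall>k<r. \<forall>l<r. (\<Sum>i<n. \<Sum>j<n. b k i * (DP - DM) $$ (i,j) * b l j) = 0"
    proof (intro allI impI)
      fix k l assume k: "k < r" and l: "l < r"
      show "(\<Sum>i<n. \<Sum>j<n. b k i * (DP - DM) $$ (i,j) * b l j) = 0"
      proof (cases "k \<le> l")
        case True then show ?thesis using qU l by blast
      next
        case False
        then show ?thesis using qU[of l k] k q_sym[OF sDe, of b k l] by simp
      qed
    qed
    have z: "A * (DP - DM) * A = 0\<^sub>m n n" using ADA_zero[OF A D sym rep q] .
    have sP: "\<forall>i<n. \<forall>j<n. P $$ (i,j) = 0 \<longrightarrow> DP $$ (i,j) = 0"
      unfolding DP_def eP_def T1_def using sPe by auto
    have sM: "\<forall>i<n. \<forall>j<n. M $$ (i,j) = 0 \<longrightarrow> DM $$ (i,j) = 0"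
      unfolding DM_def eM_def T2_def using sMe by auto
    have "DP = 0\<^sub>m n n \<and> DM = 0\<^sub>m n n" using no_dir2[OF A ext DP DM sDP sDM sP sM z] .
    moreover from c(1) obtain s where s: "s \<in> T1 <+> T2" "c s \<noteq> 0" by blast
    ultimately show False
    proof (cases s)
      case (Inl p)
      then have p: "p \<in> T1" using s by auto
      then obtain i j where pij: "p = (i,j)" "i \<le> j" "j < n" unfolding T1_def by auto
      then have "DP $$ p \<noteq> 0" using s Inl p unfolding DP_def eP_def by auto
      moreover have "DP $$ p = 0" using \<open>DP = 0\<^sub>m n n \<and> DM = 0\<^sub>m n n\<close> pij by auto
      ultimately show False by simp
    next
      case (Inr p)
      then have p: "p \<in> T2" using s by auto
      then obtain i j where pij: "p = (i,j)" "i \<le> j" "j < n" unfolding T2_def by auto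
      then have "DM $$ p \<noteq> 0" using s Inr p unfolding DM_def eM_def by auto
      moreover have "DM $$ p = 0" using \<open>DP = 0\<^sub>m n n \<and> DM = 0\<^sub>m n n\<close> pij by auto
      ultimately show False by simp
    qed
  qed
  have H: "P - M \<in> carrier_mat n n" using P M by auto
  have sH: "\<forall>i<n. \<forall>j<n. (P - M) $$ (i,j) = (P - M) $$ (j,i)" using sPe sMe P M by auto
  have n1: "nnz (P - M) \<le> 2 * card {(i,j). i \<le> j \<and> j < n \<and> (P - M) $$ (i,j) \<noteq> 0}"
    by (rule nnz_sym_bound[OF H sH])
  have "card {(i,j). i \<le> j \<and> j < n \<and> (P - M) $$ (i,j) \<noteq> 0} \<le> card (T1 \<union> T2)"
    by (intro card_mono) (use f1 f2 P M in \<open>auto simp: T1_def T2_def\<close>)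
  also have "card (T1 \<union> T2) \<le> card T1 + card T2" by (rule card_Un_le)
  finally have "nnz (P - M) \<le> 2 * card Q" using main n1 by linarith
  then have "nnz (P - M) \<le> 2 * card Q" using main by linarith
  also have "\<dots> = r\<^sup>2 + r" unfolding Q_def card_upper by (simp add: power2_eq_square algebra_simps)
  finally show ?thesis unfolding r_def .
qed


lemma rank_upper:
  fixes A :: "real mat"
  assumes A: "A \<in> carrier_mat n n"
    and rep: "\<forall>i<n. \<forall>j<n. A $$ (i,j) = (\<Sum>k<r. f k i * g k j)"
  shows "vec_space.rank n A \<le> r"
proof -
  interpret V: vec_space "TYPE(real)" n .
  define B where "B m = mat n n (\<lambda>(i,j). \<Sum>k<m. f k i * g k j)" for m
  have "V.rank (B m) \<le> m" for m
  proof (induction m)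
    case 0
    have "B 0 = 0\<^sub>m n n" unfolding B_def by (rule eq_matI) auto
    then show ?case using V.rank_0I by simp
  next
    case (Suc m)
    define R where "R = mat n n (\<lambda>(i,j). f m i * g m j)"
    have "B (Suc m) = B m + R" unfolding B_def R_def by (rule eq_matI) auto
    moreover have "V.rank (B m + R) \<le> V.rank (B m) + V.rank R"
      by (rule V.rank_subadditive) (auto simp: B_def R_def)
    moreover have "V.rank R \<le> 1"
      by (rule V.rank_le_1_product_entries[of _ n, where f = "f m" and g = "g m"]) (auto simp: R_def)
    ultimately show ?case using Suc by simp
  qed
  moreover have "A = B r" unfolding B_def using A rep by (intro eq_matI) auto
  ultimately show ?thesis by simp
qed

lemma submatrix_lead:
  fixes A :: "real mat"
  assumes A: "A \<in> carrier_mat n n" and r: "r \<le> n"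
  shows "submatrix A {..<r} {..<r} = mat r r (\<lambda>(i,j). A $$ (i,j))"
proof -
  have c: "{i. i < n \<and> i \<in> {..<r}} = {..<r}" using r by auto
  have p: "pick {..<r} i = i" if "i < r" for i
  proof -
    have "card {a \<in> {..<r}. a < i} = i"
    proof -
      have "{a \<in> {..<r}. a < i} = {..<i}" using that by auto
      then show ?thesis by simp
    qed
    then show ?thesis using pick_card_in_set[of i "{..<r}"] that by simp
  qed
  show ?thesis unfolding submatrix_def using A c p by (intro eq_matI) auto
qed

lemma rank_lower:
  fixes A :: "real mat"
  assumes A: "A \<in> carrier_mat n n" and r: "r \<le> n"
    and d: "det (mat r r (\<lambda>(i,j). A $$ (i,j))) \<noteq> 0"
  shows "r \<le> vec_space.rank n A"
proof -
  have "card {j. j < n \<and> j \<in> {..<r}} \<le> vec_space.rank n A"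
    using vec_space.rank_gt_minor[OF A, of "{..<r}" "{..<r}"] d submatrix_lead[OF A r] by simp
  moreover have "{j. j < n \<and> j \<in> {..<r}} = {..<r}" using r by auto
  ultimately show ?thesis by simp
qed


lemma sandwich_minus:
  fixes A X Y :: "real mat"
  assumes A: "A \<in> carrier_mat n n" and X: "X \<in> carrier_mat n n" and Y: "Y \<in> carrier_mat n n"
  shows "A * (X - Y) * A = A * X * A - A * Y * A"
proof -
  have "A * (X - Y) = A * X - A * Y" by (rule mult_minus_distrib_mat[OF A X Y])
  then have "A * (X - Y) * A = (A * X - A * Y) * A" by simp
  also have "\<dots> = A * X * A - A * Y * A"
    by (rule minus_mult_distrib_mat[OF mult_carrier_mat[OF A X] mult_carrier_mat[OF A Y] A])
  finally show ?thesis .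
qed

lemma extreme_from_unique:
  fixes A P M :: "real mat"
  assumes A: "A \<in> carrier_mat n n"
    and PM: "(P, M) \<in> S"
    and Sprop: "\<And>Y Z. (Y, Z) \<in> S \<Longrightarrow> Y \<in> carrier_mat n n \<and> Z \<in> carrier_mat n n \<and>
        mat_nonneg Y \<and> mat_nonneg Z \<and> A * (Y - Z) * A = A"
    and Rprop: "\<And>Y Z Y' Z'. (Y, Z) \<in> S \<Longrightarrow> (Y', Z') \<in> S \<Longrightarrow> R ((Y - Z) - (Y' - Z'))"
    and disj: "\<forall>i<n. \<forall>j<n. P $$ (i,j) = 0 \<or> M $$ (i,j) = 0"
    and uniq: "\<And>D. D \<in> carrier_mat n n \<Longrightarrow> R D \<Longrightarrow>
        (\<forall>i<n. \<forall>j<n. P $$ (i,j) = 0 \<and> M $$ (i,j) = 0 \<longrightarrow> D $$ (i,j) = 0) \<Longrightarrow>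
        A * D * A = 0\<^sub>m n n \<Longrightarrow> D = 0\<^sub>m n n"
  shows "extreme_point_pair S (P, M)"
  unfolding extreme_point_pair_def
proof (intro conjI ballI allI impI)
  show "(P, M) \<in> S" by fact
  fix y z and t :: real
  assume y: "y \<in> S" and z: "z \<in> S"
    and tc: "0 < t \<and> t < 1 \<and> (P, M) = (t \<cdot>\<^sub>m fst y + (1 - t) \<cdot>\<^sub>m fst z, t \<cdot>\<^sub>m snd y + (1 - t) \<cdot>\<^sub>m snd z)"
  obtain Py My where yy: "y = (Py, My)" by (cases y)
  obtain Pz Mz where zz: "z = (Pz, Mz)" by (cases z)
  have t0: "0 < t" and t1: "t < 1" using tc by auto
  have Pe: "P = t \<cdot>\<^sub>m Py + (1 - t) \<cdot>\<^sub>m Pz" and Me: "M = t \<cdot>\<^sub>m My + (1 - t) \<cdot>\<^sub>m Mz"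
    using tc yy zz by auto
  from Sprop[of Py My] y yy have Py: "Py \<in> carrier_mat n n" and My: "My \<in> carrier_mat n n"
    and nPy: "mat_nonneg Py" and nMy: "mat_nonneg My" and ey: "A * (Py - My) * A = A" by auto
  from Sprop[of Pz Mz] z zz have Pz: "Pz \<in> carrier_mat n n" and Mz: "Mz \<in> carrier_mat n n"
    and nPz: "mat_nonneg Pz" and nMz: "mat_nonneg Mz" and ez: "A * (Pz - Mz) * A = A" by auto
  have zero_split: "a = 0 \<and> b = 0" if "t * a + (1 - t) * b = 0" "a \<ge> 0" "b \<ge> 0" for a b :: real
  proof -
    have "t * a \<ge> 0" "(1 - t) * b \<ge> 0" using that t0 t1 by auto
    then have "t * a = 0" "(1 - t) * b = 0" using that(1) by linarith+
    then show ?thesis using t0 t1 by auto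
  qed
  have Pij: "P $$ (i,j) = t * Py $$ (i,j) + (1 - t) * Pz $$ (i,j)" if "i < n" "j < n" for i j
    using that Pe Py Pz by simp
  have Mij: "M $$ (i,j) = t * My $$ (i,j) + (1 - t) * Mz $$ (i,j)" if "i < n" "j < n" for i j
    using that Me My Mz by simp
  have P0: "Py $$ (i,j) = 0 \<and> Pz $$ (i,j) = 0" if "i < n" "j < n" "P $$ (i,j) = 0" for i j
    using zero_split[of "Py $$ (i,j)" "Pz $$ (i,j)"] Pij[OF that(1,2)] that nPy nPz Py Pz
    unfolding mat_nonneg_def by auto
  have M0: "My $$ (i,j) = 0 \<and> Mz $$ (i,j) = 0" if "i < n" "j < n" "M $$ (i,j) = 0" for i j
    using zero_split[of "My $$ (i,j)" "Mz $$ (i,j)"] Mij[OF that(1,2)] that nMy nMz My Mz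
    unfolding mat_nonneg_def by auto
  define D where "D = (Py - My) - (Pz - Mz)"
  have D: "D \<in> carrier_mat n n" unfolding D_def using Py My Pz Mz by auto
  have RD: "R D" unfolding D_def using Rprop[of Py My Pz Mz] y z yy zz by auto
  have "A * D * A = A * (Py - My) * A - A * (Pz - Mz) * A"
    unfolding D_def by (rule sandwich_minus[OF A]) (use Py My Pz Mz in auto)
  also have "\<dots> = 0\<^sub>m n n" using ey ez A by simp
  finally have "A * D * A = 0\<^sub>m n n" .
  moreover have "\<forall>i<n. \<forall>j<n. P $$ (i,j) = 0 \<and> M $$ (i,j) = 0 \<longrightarrow> D $$ (i,j) = 0"
    using P0 M0 Py My Pz Mz unfolding D_def by auto
  ultimately have D0: "D = 0\<^sub>m n n" using uniq[OF D RD] by blast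
  have Deq: "Py $$ (i,j) - My $$ (i,j) = Pz $$ (i,j) - Mz $$ (i,j)" if "i < n" "j < n" for i j
  proof -
    have "D $$ (i,j) = 0" using D0 that by simp
    then show ?thesis unfolding D_def using that Py My Pz Mz by simp
  qed
  have "Py = Pz"
  proof (rule eq_matI)
    fix i j assume "i < dim_row Pz" "j < dim_col Pz"
    then have i: "i < n" and j: "j < n" using Pz by auto
    show "Py $$ (i,j) = Pz $$ (i,j)"
    proof (cases "P $$ (i,j) = 0")
      case True then show ?thesis using P0 i j by auto
    next
      case False then have "M $$ (i,j) = 0" using disj i j by auto
      then show ?thesis using M0[OF i j] Deq[OF i j] by simp
    qed
  qed (use Py Pz in auto)
  moreover have "My = Mz"
  proof (rule eq_matI)
    fix i j assume "i < dim_row Mz" "j < dim_col Mz"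
    then have i: "i < n" and j: "j < n" using Mz by auto
    show "My $$ (i,j) = Mz $$ (i,j)"
    proof (cases "M $$ (i,j) = 0")
      case True then show ?thesis using M0 i j by auto
    next
      case False then have "P $$ (i,j) = 0" using disj i j by auto
      then show ?thesis using P0[OF i j] Deq[OF i j] by simp
    qed
  qed (use My Mz in auto)
  ultimately show "y = z" using yy zz by simp
qed


lemma sum_restrict_lt:
  fixes f :: "nat \<Rightarrow> real"
  assumes "r \<le> n"
  shows "(\<Sum>k<n. (if k < r then f k else 0)) = (\<Sum>k<r. f k)"
proof -
  have "(\<Sum>k<n. (if k < r then f k else 0)) = (\<Sum>k<n. (if k \<in> {..<r} then f k else 0))" by simp
  also have "\<dots> = (\<Sum>k\<in>{..<n} \<inter> {..<r}. f k)"
    by (rule sum.inter_restrict[symmetric]) simp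
  also have "{..<n} \<inter> {..<r} = {..<r}" using assms by auto
  finally show ?thesis .
qed

lemma core_sum1:
  assumes i: "i < r" and j: "j < r"
  shows "(\<Sum>k<r. (if i = k then 2 else 1) * ((if k = j then 1 else 0) - 1 / (real r + 1)))
         = (if i = j then 1 else (0::real))"
proof -
  have "(\<Sum>k<r. (if i = k then 2 else 1) * ((if k = j then 1 else 0) - 1 / (real r + 1)))
      = (\<Sum>k<r. (if k = j then 1 else 0) + (if k = i then (if k = j then 1 else 0) else 0)
               - 1 / (real r + 1) - (if k = i then 1 / (real r + 1) else 0))"
    by (intro sum.cong refl) auto
  also have "\<dots> = 1 + (if i = j then 1 else 0) - real r / (real r + 1) - 1 / (real r + 1)"
    using i j by (simp add: sum.distrib sum_subtractf)
  also have "\<dots> = (if i = j then 1 else 0)"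
  proof -
    have p: "real r + 1 > 0" by simp
    have "real r / (real r + 1) + 1 / (real r + 1) = 1" using p by (simp add: field_simps)
    then show ?thesis by (cases "i = j") simp_all
  qed
  finally show ?thesis .
qed

lemma core_sum2:
  assumes i: "i < r" and j: "j < r"
  shows "(\<Sum>k<r. ((if i = k then 1 else 0) - 1 / (real r + 1)) * (if k = j then 2 else 1))
         = (if i = j then 1 else (0::real))"
proof -
  have "(\<Sum>k<r. ((if i = k then 1 else 0) - 1 / (real r + 1)) * (if k = j then 2 else 1))
      = (\<Sum>k<r. (if j = k then 2 else 1) * ((if k = i then 1 else 0) - 1 / (real r + 1)))"
    by (intro sum.cong refl) (auto simp: mult.commute)
  also have "\<dots> = (if j = i then 1 else 0)" by (rule core_sum1[OF j i])
  finally show ?thesis by auto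
qed

definition Bc :: "nat \<Rightarrow> nat \<Rightarrow> real mat" where
  "Bc n r = mat n n (\<lambda>(i,j). if i < r \<and> j < r then (if i = j then 2 else 1) else 0)"
definition Hc :: "nat \<Rightarrow> nat \<Rightarrow> real mat" where
  "Hc n r = mat n n (\<lambda>(i,j). if i < r \<and> j < r then (if i = j then 1 else 0) - 1 / (real r + 1) else 0)"
definition Ec :: "nat \<Rightarrow> nat \<Rightarrow> real mat" where
  "Ec n r = mat n n (\<lambda>(i,j). if i < r \<and> i = j then 1 else 0)"
definition Pc :: "nat \<Rightarrow> nat \<Rightarrow> real mat" where
  "Pc n r = mat n n (\<lambda>(i,j). if i < r \<and> i = j then 1 - 1 / (real r + 1) else 0)"
definition Mc :: "nat \<Rightarrow> nat \<Rightarrow> real mat" where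
  "Mc n r = mat n n (\<lambda>(i,j). if i < r \<and> j < r \<and> i \<noteq> j then 1 / (real r + 1) else 0)"

lemma carriers_c[simp]: "Bc n r \<in> carrier_mat n n" "Hc n r \<in> carrier_mat n n" "Ec n r \<in> carrier_mat n n"
  "Pc n r \<in> carrier_mat n n" "Mc n r \<in> carrier_mat n n"
  by (auto simp: Bc_def Hc_def Ec_def Pc_def Mc_def)

lemma BH: assumes r: "r \<le> n" shows "Bc n r * Hc n r = Ec n r"
proof (rule eq_matI)
  fix i j assume "i < dim_row (Ec n r)" "j < dim_col (Ec n r)"
  then have i: "i < n" and j: "j < n" by (auto simp: Ec_def)
  have "(Bc n r * Hc n r) $$ (i,j) = (\<Sum>k<n. Bc n r $$ (i,k) * Hc n r $$ (k,j))"
    using i j by (simp add: scalar_prod_def atLeast0LessThan Bc_def Hc_def)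
  also have "\<dots> = (\<Sum>k<n. if k < r then (if i < r \<and> j < r then (if i = k then 2 else 1) * ((if k = j then 1 else 0) - 1 / (real r + 1)) else 0) else 0)"
    using i j by (intro sum.cong refl) (auto simp: Bc_def Hc_def)
  also have "\<dots> = (\<Sum>k<r. (if i < r \<and> j < r then (if i = k then 2 else 1) * ((if k = j then 1 else 0) - 1 / (real r + 1)) else 0))"
    by (rule sum_restrict_lt[OF r])
  also have "\<dots> = Ec n r $$ (i,j)"
    using i j core_sum1[of i r j] by (cases "i < r \<and> j < r") (auto simp: Ec_def)
  finally show "(Bc n r * Hc n r) $$ (i,j) = Ec n r $$ (i,j)" .
qed (auto simp: Bc_def Ec_def Hc_def)

lemma HB: assumes r: "r \<le> n" shows "Hc n r * Bc n r = Ec n r"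
proof (rule eq_matI)
  fix i j assume "i < dim_row (Ec n r)" "j < dim_col (Ec n r)"
  then have i: "i < n" and j: "j < n" by (auto simp: Ec_def)
  have "(Hc n r * Bc n r) $$ (i,j) = (\<Sum>k<n. Hc n r $$ (i,k) * Bc n r $$ (k,j))"
    using i j by (simp add: scalar_prod_def atLeast0LessThan Bc_def Hc_def)
  also have "\<dots> = (\<Sum>k<n. if k < r then (if i < r \<and> j < r then ((if i = k then 1 else 0) - 1 / (real r + 1)) * (if k = j then 2 else 1) else 0) else 0)"
    using i j by (intro sum.cong refl) (auto simp: Bc_def Hc_def)
  also have "\<dots> = (\<Sum>k<r. (if i < r \<and> j < r then ((if i = k then 1 else 0) - 1 / (real r + 1)) * (if k = j then 2 else 1) else 0))"
    by (rule sum_restrict_lt[OF r])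
  also have "\<dots> = Ec n r $$ (i,j)"
    using i j core_sum2[of i r j] by (cases "i < r \<and> j < r") (auto simp: Ec_def)
  finally show "(Hc n r * Bc n r) $$ (i,j) = Ec n r $$ (i,j)" .
qed (auto simp: Bc_def Ec_def Hc_def)

lemma EX:
  fixes X :: "real mat"
  assumes X: "X \<in> carrier_mat n n" and z: "\<forall>i<n. \<forall>j<n. r \<le> i \<longrightarrow> X $$ (i,j) = 0"
  shows "Ec n r * X = X"
proof (rule eq_matI)
  fix i j assume "i < dim_row X" "j < dim_col X"
  then have i: "i < n" and j: "j < n" using X by auto
  have "(Ec n r * X) $$ (i,j) = (\<Sum>k<n. Ec n r $$ (i,k) * X $$ (k,j))"
    using i j X by (simp add: scalar_prod_def atLeast0LessThan Ec_def)
  also have "\<dots> = (\<Sum>k<n. if k = i then (if i < r then X $$ (i,j) else 0) else 0)"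
    using i j by (intro sum.cong refl) (auto simp: Ec_def)
  also have "\<dots> = X $$ (i,j)" using i j z by auto
  finally show "(Ec n r * X) $$ (i,j) = X $$ (i,j)" .
qed (use X in \<open>auto simp: Ec_def\<close>)

lemma XE:
  fixes X :: "real mat"
  assumes X: "X \<in> carrier_mat n n" and z: "\<forall>i<n. \<forall>j<n. r \<le> j \<longrightarrow> X $$ (i,j) = 0"
  shows "X * Ec n r = X"
proof (rule eq_matI)
  fix i j assume "i < dim_row X" "j < dim_col X"
  then have i: "i < n" and j: "j < n" using X by auto
  have "(X * Ec n r) $$ (i,j) = (\<Sum>k<n. X $$ (i,k) * Ec n r $$ (k,j))"
    using i j X by (simp add: scalar_prod_def atLeast0LessThan Ec_def)
  also have "\<dots> = (\<Sum>k<n. if k = j then (if j < r then X $$ (i,j) else 0) else 0)"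
    using i j by (intro sum.cong refl) (auto simp: Ec_def)
  also have "\<dots> = X $$ (i,j)" using i j z by auto
  finally show "(X * Ec n r) $$ (i,j) = X $$ (i,j)" .
qed (use X in \<open>auto simp: Ec_def\<close>)


lemma construct1:
  assumes r1: "1 \<le> r" and rn: "r \<le> n"
  shows "\<exists>(A :: real mat) P M. A \<in> carrier_mat n n \<and> mat_symmetric A \<and>
           vec_space.rank n A = r \<and>
           extreme_point_pair (feasible1 n A) (P, M) \<and> nnz (P - M) = r\<^sup>2"
proof -
  let ?A = "Bc n r" and ?P = "Pc n r" and ?M = "Mc n r" and ?H = "Hc n r" and ?E = "Ec n r"
  have A: "?A \<in> carrier_mat n n" by simp
  have c0: "1 / (real r + 1) > 0" by simp
  have c1: "1 - 1 / (real r + 1) > 0" using r1 by (simp add: field_simps)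
  have symA: "mat_symmetric ?A" unfolding sym_iff[OF A] by (auto simp: Bc_def)
  have PMH: "?P - ?M = ?H" by (rule eq_matI) (auto simp: Pc_def Mc_def Hc_def)
  have rowsA: "\<forall>i<n. \<forall>j<n. r \<le> i \<longrightarrow> ?A $$ (i,j) = 0" by (auto simp: Bc_def)
  have colsA: "\<forall>i<n. \<forall>j<n. r \<le> j \<longrightarrow> ?A $$ (i,j) = 0" by (auto simp: Bc_def)
  have AHA: "?A * ?H * ?A = ?A" using BH[OF rn] EX[OF A rowsA] by simp
  have rk_up: "vec_space.rank n ?A \<le> r"
  proof (rule rank_upper[OF A, where f = "\<lambda>k i. if i = k then 1 else 0"
        and g = "\<lambda>k j. if j < r then (if k = j then 2 else 1) else 0"])
    show "\<forall>i<n. \<forall>j<n. ?A $$ (i,j) = (\<Sum>k<r. (if i = k then 1 else 0) * (if j < r then (if k = j then 2 else 1) else 0))"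
    proof (intro allI impI)
      fix i j assume i: "i < n" and j: "j < n"
      have "(\<Sum>k<r. (if i = k then 1 else 0) * (if j < r then (if k = j then 2 else 1) else (0::real)))
          = (\<Sum>k<r. (if k = i then (if j < r then (if i = j then 2 else 1) else 0) else 0))"
        by (intro sum.cong refl) auto
      also have "\<dots> = ?A $$ (i,j)" using i j by (auto simp: Bc_def)
      finally show "?A $$ (i,j) = (\<Sum>k<r. (if i = k then 1 else 0) * (if j < r then (if k = j then 2 else 1) else 0))" by simp
    qed
  qed
  have rk_low: "r \<le> vec_space.rank n ?A"
  proof (rule rank_lower[OF A rn])
    let ?B' = "mat r r (\<lambda>(i,j). ?A $$ (i,j))"
    let ?H' = "mat r r (\<lambda>(i,j). (if i = j then 1 else 0) - 1 / (real r + 1))"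
    have "?B' * ?H' = 1\<^sub>m r"
    proof (rule eq_matI)
      fix i j assume "i < dim_row (1\<^sub>m r)" "j < dim_col (1\<^sub>m r)"
      then have i: "i < r" and j: "j < r" by auto
      have "(?B' * ?H') $$ (i,j) = (\<Sum>k<r. ?B' $$ (i,k) * ?H' $$ (k,j))"
        using i j by (simp add: scalar_prod_def atLeast0LessThan)
      also have "\<dots> = (\<Sum>k<r. (if i = k then 2 else 1) * ((if k = j then 1 else 0) - 1 / (real r + 1)))"
        using i j rn by (intro sum.cong refl) (auto simp: Bc_def)
      also have "\<dots> = 1\<^sub>m r $$ (i,j)" using core_sum1[OF i j] i j by simp
      finally show "(?B' * ?H') $$ (i,j) = 1\<^sub>m r $$ (i,j)" .
    qed auto
    then have "det ?B' * det ?H' = 1"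
      using det_mult[of ?B' r ?H'] by simp
    then show "det ?B' \<noteq> 0" by auto
  qed
  have rk: "vec_space.rank n ?A = r" using rk_up rk_low by simp
  have Pn: "mat_nonneg ?P" unfolding mat_nonneg_def using c1 by (auto simp: Pc_def)
  have Mn: "mat_nonneg ?M" unfolding mat_nonneg_def using c0 by (auto simp: Mc_def)
  have PMf: "(?P, ?M) \<in> feasible1 n ?A" unfolding feasible1_def using PMH AHA Pn Mn by simp
  have ext: "extreme_point_pair (feasible1 n ?A) (?P, ?M)"
  proof (rule extreme_from_unique[OF A PMf, where R = "\<lambda>_. True"])
    show "\<And>Y Z. (Y, Z) \<in> feasible1 n ?A \<Longrightarrow> Y \<in> carrier_mat n n \<and> Z \<in> carrier_mat n n \<and>
        mat_nonneg Y \<and> mat_nonneg Z \<and> ?A * (Y - Z) * ?A = ?A" unfolding feasible1_def by auto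
    show "\<forall>i<n. \<forall>j<n. ?P $$ (i,j) = 0 \<or> ?M $$ (i,j) = 0" by (auto simp: Pc_def Mc_def)
    fix D :: "real mat"
    assume D: "D \<in> carrier_mat n n"
      and supp: "\<forall>i<n. \<forall>j<n. ?P $$ (i,j) = 0 \<and> ?M $$ (i,j) = 0 \<longrightarrow> D $$ (i,j) = 0"
      and z: "?A * D * ?A = 0\<^sub>m n n"
    have blk: "D $$ (i,j) = 0" if "i < n" "j < n" "\<not> (i < r \<and> j < r)" for i j
      using supp that by (auto simp: Pc_def Mc_def)
    have H: "?H \<in> carrier_mat n n" by simp
    have "?H * (?A * D * ?A) * ?H = (?H * ?A) * D * (?A * ?H)"
    proof -
      have AD: "?A * D \<in> carrier_mat n n" "?H * ?A \<in> carrier_mat n n" "?A * ?H \<in> carrier_mat n n"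
        using mult_carrier_mat[OF A D] mult_carrier_mat[OF H A] mult_carrier_mat[OF A H] by auto
      have "?H * (?A * D * ?A) * ?H = ?H * (?A * D * (?A * ?H))"
        by (subst assoc_mult_mat[OF H mult_carrier_mat[OF AD(1) A] H], subst assoc_mult_mat[OF AD(1) A H], rule refl)
      also have "\<dots> = (?H * (?A * D)) * (?A * ?H)"
        using assoc_mult_mat[OF H AD(1) AD(3)] by simp
      also have "?H * (?A * D) = (?H * ?A) * D" using assoc_mult_mat[OF H A D] by simp
      finally show ?thesis .
    qed
    also have "\<dots> = ?E * D * ?E" using BH[OF rn] HB[OF rn] by simp
    also have "?E * D = D" by (rule EX[OF D]) (use blk in auto)
    also have "D * ?E = D" by (rule XE[OF D]) (use blk in auto)
    finally have "?H * (?A * D * ?A) * ?H = D" .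
    then show "D = 0\<^sub>m n n" using z H by simp
  qed simp
  have "{(i,j). i < dim_row (?P - ?M) \<and> j < dim_col (?P - ?M) \<and> (?P - ?M) $$ (i,j) \<noteq> 0} = {..<r} \<times> {..<r}"
  proof -
    have nz: "?H $$ (i,j) \<noteq> 0 \<longleftrightarrow> i < r \<and> j < r" if "i < n" "j < n" for i j
    proof (cases "i < r \<and> j < r")
      case True
      then show ?thesis using that c0 c1 by (cases "i = j") (auto simp: Hc_def)
    next
      case False then show ?thesis using that by (auto simp: Hc_def)
    qed
    have dH: "dim_row ?H = n" "dim_col ?H = n" by (simp_all add: Hc_def)
    show ?thesis unfolding PMH dH set_eq_iff
    proof (intro allI)
      fix p :: "nat \<times> nat"
      obtain i j where p: "p = (i,j)" by (cases p)
      show "p \<in> {(i, j). i < n \<and> j < n \<and> ?H $$ (i, j) \<noteq> 0} \<longleftrightarrow> p \<in> {..<r} \<times> {..<r}"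
        unfolding p using nz[of i j] rn by auto
    qed
  qed
  then have "nnz (?P - ?M) = r\<^sup>2" unfolding nnz_def by (simp add: power2_eq_square)
  then show ?thesis using A symA rk ext by blast
qed


lemma ADA_entry:
  fixes A D :: "real mat"
  assumes A: "A \<in> carrier_mat n n" and D: "D \<in> carrier_mat n n"
    and sym: "\<forall>i<n. \<forall>j<n. A $$ (i,j) = A $$ (j,i)"
    and rep: "\<forall>i<n. \<forall>j<n. A $$ (i,j) = (\<Sum>k<r. X k j * b k i)"
    and a: "a < n" and c: "c < n"
  shows "(A * D * A) $$ (a,c) = (\<Sum>k<r. \<Sum>l<r. (X k a * X l c) * (\<Sum>i<n. \<Sum>j<n. b k i * D $$ (i,j) * b l j))"
proof -
  have "(A * D * A) $$ (a,c) = (\<Sum>i<n. \<Sum>j<n. A $$ (a,i) * D $$ (i,j) * A $$ (j,c))"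
    using A D a c by (simp add: scalar_prod_def atLeast0LessThan sum_distrib_left mult.assoc)
  also have "\<dots> = (\<Sum>i<n. \<Sum>j<n. (\<Sum>k<r. X k a * b k i) * D $$ (i,j) * (\<Sum>l<r. X l c * b l j))"
    using sym rep a c by (intro sum.cong refl, auto)
  also have "\<dots> = (\<Sum>i<n. \<Sum>j<n. \<Sum>k<r. \<Sum>l<r. (X k a * X l c) * (b k i * D $$ (i,j) * b l j))"
    by (simp add: sum_distrib_left sum_distrib_right mult_ac)
  also have "\<dots> = (\<Sum>i<n. \<Sum>k<r. \<Sum>j<n. \<Sum>l<r. (X k a * X l c) * (b k i * D $$ (i,j) * b l j))"
    by (rule sum.cong[OF refl], rule sum.swap)
  also have "\<dots> = (\<Sum>k<r. \<Sum>i<n. \<Sum>j<n. \<Sum>l<r. (X k a * X l c) * (b k i * D $$ (i,j) * b l j))"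
    by (rule sum.swap)
  also have "\<dots> = (\<Sum>k<r. \<Sum>i<n. \<Sum>l<r. \<Sum>j<n. (X k a * X l c) * (b k i * D $$ (i,j) * b l j))"
    by (intro sum.cong refl, rule sum.swap)
  also have "\<dots> = (\<Sum>k<r. \<Sum>l<r. \<Sum>i<n. \<Sum>j<n. (X k a * X l c) * (b k i * D $$ (i,j) * b l j))"
    by (intro sum.cong refl, rule sum.swap)
  also have "\<dots> = (\<Sum>k<r. \<Sum>l<r. (X k a * X l c) * (\<Sum>i<n. \<Sum>j<n. b k i * D $$ (i,j) * b l j))"
    by (simp add: sum_distrib_left)
  finally show ?thesis .
qed

definition xv :: "nat \<Rightarrow> nat \<Rightarrow> nat \<Rightarrow> real" where
  "xv r k i = (if i = k \<or> i = r then 1 else 0)"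

lemma xsum:
  fixes f :: "nat \<Rightarrow> real"
  assumes k: "k < r" and rn: "r < n"
  shows "(\<Sum>i<n. xv r k i * f i) = f k + f r"
proof -
  have "(\<Sum>i<n. xv r k i * f i) = (\<Sum>i<n. (if i = k then f i else 0) + (if i = r then f i else 0))"
    using k by (intro sum.cong refl) (auto simp: xv_def)
  also have "\<dots> = f k + f r" using k rn by (simp add: sum.distrib)
  finally show ?thesis .
qed

lemma xsum':
  fixes f :: "nat \<Rightarrow> real"
  assumes k: "k < r" and rn: "r < n"
  shows "(\<Sum>i<n. f i * xv r k i) = f k + f r"
  using xsum[OF k rn, of f] by (simp add: mult.commute)

lemma qx:
  fixes D :: "real mat"
  assumes k: "k < r" and l: "l < r" and rn: "r < n"
  shows "(\<Sum>i<n. \<Sum>j<n. xv r k i * D $$ (i,j) * xv r l j) = D $$ (k,l) + D $$ (k,r) + D $$ (r,l) + D $$ (r,r)"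
proof -
  have "(\<Sum>i<n. \<Sum>j<n. xv r k i * D $$ (i,j) * xv r l j) = (\<Sum>i<n. xv r k i * (\<Sum>j<n. D $$ (i,j) * xv r l j))"
    by (simp add: sum_distrib_left mult.assoc)
  also have "\<dots> = (\<Sum>i<n. xv r k i * (D $$ (i,l) + D $$ (i,r)))"
    using xsum'[OF l rn] by simp
  also have "\<dots> = D $$ (k,l) + D $$ (k,r) + (D $$ (r,l) + D $$ (r,r))"
    by (rule xsum[OF k rn])
  finally show ?thesis by simp
qed

lemma mult_ind: "(if P then 1 else (0::real)) * x = (if P then x else 0)" by simp

lemma xv_low: assumes "a < r" shows "xv r k a = (if k = a then 1 else 0)"
  using assms by (auto simp: xv_def)

lemma collapse:
  fixes g :: "nat \<Rightarrow> nat \<Rightarrow> real"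
  assumes a: "a < r" and c: "c < r"
  shows "(\<Sum>k<r. \<Sum>l<r. (xv r k a * xv r l c) * g k l) = g a c"
proof -
  have inner: "(\<Sum>l<r. (xv r k a * xv r l c) * g k l) = (if k = a then g k c else 0)" for k
  proof (cases "k = a")
    case True
    have "(\<Sum>l<r. (xv r k a * xv r l c) * g k l) = (\<Sum>l<r. if l = c then g k l else 0)"
      using True a c by (intro sum.cong refl) (auto simp: xv_low)
    also have "\<dots> = g k c" using c by simp
    finally show ?thesis using True by simp
  next
    case False
    then show ?thesis using a by (simp add: xv_low)
  qed
  have "(\<Sum>k<r. \<Sum>l<r. (xv r k a * xv r l c) * g k l) = (\<Sum>k<r. if k = a then g k c else 0)"
    using inner by simp
  also have "\<dots> = g a c" using a by simp
  finally show ?thesis .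
qed

definition A2 :: "nat \<Rightarrow> nat \<Rightarrow> real mat" where
  "A2 n r = mat n n (\<lambda>(i,j). \<Sum>k<r. xv r k i * xv r k j)"
definition P2 :: "nat \<Rightarrow> nat \<Rightarrow> real mat" where
  "P2 n r = mat n n (\<lambda>(i,j). if (i < r \<and> j = r) \<or> (i = r \<and> j < r) then 1/2 else 0)"
definition M2 :: "nat \<Rightarrow> nat \<Rightarrow> real mat" where
  "M2 n r = mat n n (\<lambda>(i,j). if i < r \<and> j < r \<and> i \<noteq> j then 1 else 0)"

lemma carriers2[simp]: "A2 n r \<in> carrier_mat n n" "P2 n r \<in> carrier_mat n n" "M2 n r \<in> carrier_mat n n"
  by (auto simp: A2_def P2_def M2_def)

lemma A2_rep: "\<forall>i<n. \<forall>j<n. A2 n r $$ (i,j) = (\<Sum>k<r. xv r k j * xv r k i)"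
  by (auto simp: A2_def mult.commute)

lemma A2_sym: "\<forall>i<n. \<forall>j<n. A2 n r $$ (i,j) = A2 n r $$ (j,i)"
  by (auto simp: A2_def mult.commute)

lemma A2_low: assumes "a < r" "r < n" "j < n" shows "A2 n r $$ (a,j) = xv r a j"
proof -
  have "A2 n r $$ (a,j) = (\<Sum>k<r. if k = a then xv r k j else 0)"
    using assms by (auto simp: A2_def xv_low mult_ind intro!: sum.cong)
  also have "\<dots> = xv r a j" using assms by simp
  finally show ?thesis .
qed

lemma construct2:
  assumes r3: "3 \<le> r" and rn: "r + 2 \<le> n"
  shows "\<exists>(A :: real mat) P M. A \<in> carrier_mat n n \<and> mat_symmetric A \<and>
           vec_space.rank n A = r \<and>
           extreme_point_pair (feasible2 n A) (P, M) \<and> nnz (P - M) = r\<^sup>2 + r"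
proof -
  let ?A = "A2 n r" and ?P = "P2 n r" and ?M = "M2 n r"
  have rn': "r < n" using rn by simp
  have A: "?A \<in> carrier_mat n n" by simp
  have symA: "mat_symmetric ?A" unfolding sym_iff[OF A] using A2_sym by blast
  have H: "?P - ?M \<in> carrier_mat n n" using carriers2(3) by (rule minus_carrier_mat)
  have Hlow: "(?P - ?M) $$ (k,l) + (?P - ?M) $$ (k,r) + (?P - ?M) $$ (r,l) + (?P - ?M) $$ (r,r)
      = (if k = l then 1 else 0)" if "k < r" "l < r" for k l
    using that rn' by (auto simp: P2_def M2_def)
  have AHA: "?A * (?P - ?M) * ?A = ?A"
  proof (rule eq_matI)
    fix a c assume "a < dim_row ?A" "c < dim_col ?A"
    then have a: "a < n" and c: "c < n" by (auto simp: A2_def)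
    have "(?A * (?P - ?M) * ?A) $$ (a,c)
        = (\<Sum>k<r. \<Sum>l<r. (xv r k a * xv r l c) * (\<Sum>i<n. \<Sum>j<n. xv r k i * (?P - ?M) $$ (i,j) * xv r l j))"
      by (rule ADA_entry[OF A H A2_sym A2_rep a c])
    also have "\<dots> = (\<Sum>k<r. \<Sum>l<r. (xv r k a * xv r l c) * (if k = l then 1 else 0))"
      using qx[OF _ _ rn'] Hlow by (intro sum.cong refl) simp
    also have "\<dots> = (\<Sum>k<r. xv r k a * xv r k c)"
      by (intro sum.cong refl) (simp add: if_distrib cong: if_cong)
    also have "\<dots> = ?A $$ (a,c)" using a c by (simp add: A2_def)
    finally show "(?A * (?P - ?M) * ?A) $$ (a,c) = ?A $$ (a,c)" .
  qed (auto simp: A2_def)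
  have rk_up: "vec_space.rank n ?A \<le> r"
    by (rule rank_upper[OF A, where f = "\<lambda>k i. xv r k i" and g = "\<lambda>k j. xv r k j"]) (auto simp: A2_def)
  have rk_low: "r \<le> vec_space.rank n ?A"
  proof (rule rank_lower[OF A])
    show "r \<le> n" using rn by simp
    have "mat r r (\<lambda>(i,j). ?A $$ (i,j)) = 1\<^sub>m r"
      by (rule eq_matI) (use rn' in \<open>auto simp: A2_low xv_def\<close>)
    then show "det (mat r r (\<lambda>(i,j). ?A $$ (i,j))) \<noteq> 0" by simp
  qed
  have rk: "vec_space.rank n ?A = r" using rk_up rk_low by simp
  have Pn: "mat_nonneg ?P" unfolding mat_nonneg_def by (auto simp: P2_def)
  have Mn: "mat_nonneg ?M" unfolding mat_nonneg_def by (auto simp: M2_def)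
  have sP: "mat_symmetric ?P" unfolding sym_iff[OF carriers2(2)] by (auto simp: P2_def)
  have sM: "mat_symmetric ?M" unfolding sym_iff[OF carriers2(3)] by (auto simp: M2_def)
  have PMf: "(?P, ?M) \<in> feasible2 n ?A" unfolding feasible2_def using AHA Pn Mn sP sM by simp
  have ext: "extreme_point_pair (feasible2 n ?A) (?P, ?M)"
  proof (rule extreme_from_unique[OF A PMf, where R = "\<lambda>D. \<forall>i<n. \<forall>j<n. D $$ (i,j) = D $$ (j,i)"])
    show "\<And>Y Z. (Y, Z) \<in> feasible2 n ?A \<Longrightarrow> Y \<in> carrier_mat n n \<and> Z \<in> carrier_mat n n \<and>
        mat_nonneg Y \<and> mat_nonneg Z \<and> ?A * (Y - Z) * ?A = ?A" unfolding feasible2_def by auto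
    show "\<And>Y Z Y' Z'. (Y, Z) \<in> feasible2 n ?A \<Longrightarrow> (Y', Z') \<in> feasible2 n ?A \<Longrightarrow>
        \<forall>i<n. \<forall>j<n. (Y - Z - (Y' - Z')) $$ (i,j) = (Y - Z - (Y' - Z')) $$ (j,i)"
    proof -
      fix Y Z Y' Z' assume "(Y, Z) \<in> feasible2 n ?A" "(Y', Z') \<in> feasible2 n ?A"
      then have c: "Y \<in> carrier_mat n n" "Z \<in> carrier_mat n n" "Y' \<in> carrier_mat n n" "Z' \<in> carrier_mat n n"
        and s: "mat_symmetric Y" "mat_symmetric Z" "mat_symmetric Y'" "mat_symmetric Z'"
        unfolding feasible2_def by auto
      have s': "\<forall>i<n. \<forall>j<n. Y $$ (i,j) = Y $$ (j,i)" "\<forall>i<n. \<forall>j<n. Z $$ (i,j) = Z $$ (j,i)"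
        "\<forall>i<n. \<forall>j<n. Y' $$ (i,j) = Y' $$ (j,i)" "\<forall>i<n. \<forall>j<n. Z' $$ (i,j) = Z' $$ (j,i)"
        using s sym_iff c by blast+
      show "\<forall>i<n. \<forall>j<n. (Y - Z - (Y' - Z')) $$ (i,j) = (Y - Z - (Y' - Z')) $$ (j,i)"
        using c s' by auto
    qed
    show "\<forall>i<n. \<forall>j<n. ?P $$ (i,j) = 0 \<or> ?M $$ (i,j) = 0" by (auto simp: P2_def M2_def)
    fix D :: "real mat"
    assume D: "D \<in> carrier_mat n n" and sD: "\<forall>i<n. \<forall>j<n. D $$ (i,j) = D $$ (j,i)"
      and supp: "\<forall>i<n. \<forall>j<n. ?P $$ (i,j) = 0 \<and> ?M $$ (i,j) = 0 \<longrightarrow> D $$ (i,j) = 0"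
      and z: "?A * D * ?A = 0\<^sub>m n n"
    have q0: "D $$ (a,c) + D $$ (a,r) + D $$ (r,c) + D $$ (r,r) = 0" if a: "a < r" and c: "c < r" for a c
    proof -
      have an: "a < n" and cn: "c < n" using a c rn' by auto
      have "0 = (?A * D * ?A) $$ (a,c)" using z an cn by simp
      also have "\<dots> = (\<Sum>k<r. \<Sum>l<r. (xv r k a * xv r l c) * (\<Sum>i<n. \<Sum>j<n. xv r k i * D $$ (i,j) * xv r l j))"
        by (rule ADA_entry[OF A D A2_sym A2_rep an cn])
      also have "\<dots> = (\<Sum>i<n. \<Sum>j<n. xv r a i * D $$ (i,j) * xv r c j)"
        by (rule collapse[OF a c])
      also have "\<dots> = D $$ (a,c) + D $$ (a,r) + D $$ (r,c) + D $$ (r,r)"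
        by (rule qx[OF a c rn'])
      finally show ?thesis by simp
    qed
    have Drr: "D $$ (r,r) = 0" using supp rn' by (auto simp: P2_def M2_def)
    have Daa: "D $$ (a,a) = 0" if "a < r" for a using supp that rn' by (auto simp: P2_def M2_def)
    have Dar: "D $$ (a,r) = 0" if a: "a < r" for a
    proof -
      have "D $$ (r,a) = D $$ (a,r)" using sD a rn' by auto
      then show ?thesis using q0[OF a a] Daa[OF a] Drr by simp
    qed
    have Dra: "D $$ (r,a) = 0" if a: "a < r" for a
      using sD a rn' Dar[OF a] by auto
    have Dac: "D $$ (a,c) = 0" if "a < r" "c < r" for a c
      using q0[OF that] Dar[OF that(1)] Dra[OF that(2)] Drr by simp
    show "D = 0\<^sub>m n n"
    proof (rule eq_matI)
      fix i j assume "i < dim_row (0\<^sub>m n n)" "j < dim_col (0\<^sub>m n n)"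
      then have i: "i < n" and j: "j < n" by auto
      show "D $$ (i,j) = 0\<^sub>m n n $$ (i,j)"
      proof (cases "(i < r \<and> j < r) \<or> (i < r \<and> j = r) \<or> (i = r \<and> j < r)")
        case True then show ?thesis using Dac Dar Dra i j by auto
      next
        case False then show ?thesis using supp i j by (auto simp: P2_def M2_def)
      qed
    qed (use D in auto)
  qed
  let ?Off = "({..<r} \<times> {..<r}) - (\<lambda>i. (i,i)) ` {..<r}"
  let ?Col = "{..<r} \<times> {r}" and ?Row = "{r} \<times> {..<r}"
  have dH: "dim_row (?P - ?M) = n" "dim_col (?P - ?M) = n" by (simp_all add: P2_def M2_def)
  have Sset: "{(i,j). i < dim_row (?P - ?M) \<and> j < dim_col (?P - ?M) \<and> (?P - ?M) $$ (i,j) \<noteq> 0}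
      = ?Off \<union> ?Col \<union> ?Row"
    unfolding dH set_eq_iff
  proof (intro allI)
    fix p :: "nat \<times> nat"
    obtain i j where p: "p = (i,j)" by (cases p)
    show "p \<in> {(i, j). i < n \<and> j < n \<and> (?P - ?M) $$ (i, j) \<noteq> 0} \<longleftrightarrow> p \<in> ?Off \<union> ?Col \<union> ?Row"
      unfolding p using rn' by (auto simp: P2_def M2_def split: if_splits)
  qed
  have cD: "card ((\<lambda>i. (i,i)) ` {..<r}) = r" by (subst card_image) (auto simp: inj_on_def)
  have cOff: "card ?Off = r * r - r"
    by (subst card_Diff_subset) (auto simp: cD card_cartesian_product)
  have fin: "finite ?Off" "finite ?Col" "finite ?Row" by auto
  have "card (?Off \<union> ?Col \<union> ?Row) = card ?Off + card ?Col + card ?Row"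
    using fin by (subst card_Un_disjoint, auto)+
  also have "\<dots> = r * r - r + r + r" using cOff by (simp add: card_cartesian_product)
  also have "\<dots> = r\<^sup>2 + r"
  proof -
    have "r \<le> r * r" by simp
    then show ?thesis by (simp add: power2_eq_square)
  qed
  finally have "nnz (?P - ?M) = r\<^sup>2 + r" unfolding nnz_def Sset .
  then show ?thesis using A symA rk ext by blast
qed

theorem proposition2p1:
  shows
   "(\<forall>n (A :: real mat) P M. A \<in> carrier_mat n n \<and> mat_symmetric A \<and>
        extreme_point_pair (feasible1 n A) (P, M) \<longrightarrow>
        nnz (P - M) \<le> (vec_space.rank n A)\<^sup>2)
    \<and> (\<forall>n r. 1 \<le> r \<and> r \<le> n \<longrightarrow>
        (\<exists>(A :: real mat) P M. A \<in> carrier_mat n n \<and> mat_symmetric A \<and>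
           vec_space.rank n A = r \<and>
           extreme_point_pair (feasible1 n A) (P, M) \<and> nnz (P - M) = r\<^sup>2))
    \<and> (\<forall>n (A :: real mat) P M. A \<in> carrier_mat n n \<and> mat_symmetric A \<and>
        extreme_point_pair (feasible2 n A) (P, M) \<longrightarrow>
        nnz (P - M) \<le> (vec_space.rank n A)\<^sup>2 + vec_space.rank n A)
    \<and> (\<forall>n r. 3 \<le> r \<and> r + 2 \<le> n \<longrightarrow>
        (\<exists>(A :: real mat) P M. A \<in> carrier_mat n n \<and> mat_symmetric A \<and>
           vec_space.rank n A = r \<and>
           extreme_point_pair (feasible2 n A) (P, M) \<and> nnz (P - M) = r\<^sup>2 + r))"
proof (intro conjI allI impI)
  fix n and A :: "real mat" and P M
  assume h: "A \<in> carrier_mat n n \<and> mat_symmetric A \<and> extreme_point_pair (feasible1 n A) (P, M)"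
  then show "nnz (P - M) \<le> (vec_space.rank n A)\<^sup>2" using bound1 by blast
next
  fix n r :: nat assume "1 \<le> r \<and> r \<le> n"
  then show "\<exists>(A :: real mat) P M. A \<in> carrier_mat n n \<and> mat_symmetric A \<and>
           vec_space.rank n A = r \<and>
           extreme_point_pair (feasible1 n A) (P, M) \<and> nnz (P - M) = r\<^sup>2"
    using construct1 by blast
next
  fix n and A :: "real mat" and P M
  assume h: "A \<in> carrier_mat n n \<and> mat_symmetric A \<and> extreme_point_pair (feasible2 n A) (P, M)"
  then show "nnz (P - M) \<le> (vec_space.rank n A)\<^sup>2 + vec_space.rank n A" using bound2 by blast
next
  fix n r :: nat assume "3 \<le> r \<and> r + 2 \<le> n"
  then show "\<exists>(A :: real mat) P M. A \<in> carrier_mat n n \<and> mat_symmetric A \<and>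
           vec_space.rank n A = r \<and>
           extreme_point_pair (feasible2 n A) (P, M) \<and> nnz (P - M) = r\<^sup>2 + r"
    using construct2 by blast
qed

end
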